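(* Let $n\ge6$ and $d_n=\dim\Delta_n$. For $k\ge0$ let $\rho^{(k)}_0$ be a zero of minimal modulus of the $h$-polynomial of the $k$-fold barycentric subdivision $\Delta_n^{(k)}$. Then as $k\to\infty$, $$|\widetilde\chi(\Delta_n)|=H_{1,d_n}\,f^{\Delta_n}_{d_n}\,\bigl|\rho^{(k)}_0\bigr|\,(d_n+1)!^{k}\,(1+o(1)).$$
   Context: For a squarefree positive integer $k$ let $P(k)$ be its set of prime factors ($P(1)=\emptyset$). $\Delta_n$ is the abstract simplicial complex $\{P(k): 1\le k\le n,\ k\text{ squarefree}\}$; a $d$-simplex is a member of cardinality $d+1$, $\dim$ is the maximal such $d$, and $f^{\Delta}_i$ is the number of $i$-simplices ($f^\Delta_{-1}=1$). The reduced Euler characteristic is $\widetilde\chi(\Delta)=\sum_{\sigma\in\Delta}(-1)^{\#\sigma-1}$. The $h$-polynomial of a complex $\Delta$ of dimension $d$ is $h^\Delta(z)=\sum_{i=-1}^{d}f^\Delta_i(z-1)^{d-i}$. The barycentric subdivision $\Delta'$ consists of $\emptyset$ and all sets $\{\sigma_0,\dots,\sigma_m\}$ of nonempty simplices with $\sigma_0\subsetneq\cdots\subsetneq\sigma_m$; $\Delta^{(k)}$ is its $k$-fold iterate. For integers $i,d\ge -1$ define $f_{-1,-1}=1$, $f_{-1,d}=0$ for $d\ge0$, $f_{i,-1}=0$ for $i\ge0$, $f_{i,d}=(i+1)!\,S(d+1,i+1)$ for $i,d\ge0$ ($S$ = Stirling numbers of the second kind); for $d\ge0$ set $F_{d,d}=1$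 and recursively for $-1\le i\le d-1$, $F_{i,d}=\frac{1}{(d+1)!-(i+1)!}\sum_{j=i+1}^{d}f_{i,j}F_{j,d}$; $F_d(z)=\sum_{i=-1}^dF_{i,d}z^{d-i}$ and $H_d(z)=F_d(z-1)=\sum_{i=0}^{d+1}H_{i,d}z^{d+1-i}$. *)

theory Defs
  imports Complex_Main "HOL-Library.FSet" "HOL-Library.Landau_Symbols"
    "HOL-Computational_Algebra.Polynomial" "HOL-Computational_Algebra.Squarefree"
    "HOL-Computational_Algebra.Primes" "HOL-Combinatorics.Stirling"
begin

text \<open>A universe of vertices closed under taking (finite) sets of vertices,
so that iterated barycentric subdivisions live in one type.
Original vertices of Delta_n are primes (Prim p); a vertex of a barycentric
subdivision is a (nonempty, finite) simplex sigma of the previous complex, encoded as Face sigma.\<close>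
datatype hf = Prim nat | Face "hf fset"

type_synonym scomplex = "hf set set"

definition Delta :: "nat \<Rightarrow> scomplex" where
  "Delta n = {Prim ` prime_factors k | k. 1 \<le> k \<and> k \<le> n \<and> squarefree k}"

definition bsd :: "scomplex \<Rightarrow> scomplex" where
  "bsd D = {(\<lambda>\<sigma>. Face (Abs_fset \<sigma>)) ` C | C.
      finite C \<and> C \<subseteq> D - {{}} \<and> (\<forall>\<sigma>\<in>C. \<forall>\<tau>\<in>C. \<sigma> \<subseteq> \<tau> \<or> \<tau> \<subseteq> \<sigma>)}"

text \<open>dimension (as an integer, so that the empty complex {{}} has dimension -1)\<close>
definition cdim :: "scomplex \<Rightarrow> int" where
  "cdim D = int (Max (card ` D)) - 1"

text \<open>f_i = number of i-simplices (f_{-1} = 1 for a nonempty complex)\<close>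
definition fvec :: "scomplex \<Rightarrow> int \<Rightarrow> nat" where
  "fvec D i = card {\<sigma>\<in>D. int (card \<sigma>) = i + 1}"

definition red_euler :: "scomplex \<Rightarrow> real" where
  "red_euler D = (\<Sum>\<sigma>\<in>D. (-1::real) powi (int (card \<sigma>) - 1))"

definition hpoly :: "scomplex \<Rightarrow> complex poly" where
  "hpoly D = pcompose (\<Sum>i\<in>{-1..cdim D}. monom (of_nat (fvec D i)) (nat (cdim D - i))) [:-1, 1:]"

definition min_zero_modulus :: "complex poly \<Rightarrow> real" where
  "min_zero_modulus p = Min (norm ` {z. poly p z = 0})"

definition fcoef :: "int \<Rightarrow> int \<Rightarrow> real" where
  "fcoef i d = (if i = -1 \<and> d = -1 then 1
     else if i = -1 \<and> d \<ge> 0 then 0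
     else if i \<ge> 0 \<and> d = -1 then 0
     else if i \<ge> 0 \<and> d \<ge> 0 then fact (nat (i+1)) * real (Stirling (nat (d+1)) (nat (i+1)))
     else 0)"

function Fcoef :: "int \<Rightarrow> int \<Rightarrow> real" where
  "Fcoef i d = (if d < 0 \<or> i < -1 \<or> i > d then 0
     else if i = d then 1
     else (1 / (fact (nat (d+1)) - fact (nat (i+1)))) *
            (\<Sum>j\<in>{i+1..d}. fcoef i j * Fcoef j d))"
  by auto
termination
  by (relation "measure (\<lambda>(i,d). nat (d - i))") auto

declare Fcoef.simps[simp del]

definition Fpoly :: "int \<Rightarrow> real poly" where
  "Fpoly d = (\<Sum>i\<in>{-1..d}. monom (Fcoef i d) (nat (d - i)))"

definition Hpoly :: "int \<Rightarrow> real poly" where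
  "Hpoly d = pcompose (Fpoly d) [:-1, 1:]"

definition Hcoef :: "int \<Rightarrow> int \<Rightarrow> real" where
  "Hcoef i d = coeff (Hpoly d) (nat (d + 1 - i))"

end

theory Submission
  imports Defs "HOL-Computational_Algebra.Formal_Power_Series"
begin

definition W :: "nat \<Rightarrow> nat \<Rightarrow> nat" where
  "W n a = fact a * Stirling n a"

lemma W_0_0 [simp]: "W 0 0 = 1" by (simp add: W_def)
lemma W_0_Suc [simp]: "W 0 (Suc a) = 0" by (simp add: W_def)
lemma W_Suc_0 [simp]: "W (Suc n) 0 = 0" by (simp add: W_def)
lemma W_less [simp]: "n < a \<Longrightarrow> W n a = 0" by (simp add: W_def)
lemma W_same [simp]: "W n n = fact n" by (simp add: W_def)
lemma W_Suc_Suc: "W (Suc n) (Suc a) = Suc a * (W n (Suc a) + W n a)"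
  by (simp add: W_def algebra_simps)

lemma W_n_0: "W n 0 = (if n = 0 then 1 else 0)" by (cases n) auto

lemma W_binom_identity:
  fixes y :: real
  shows "(\<Sum>a\<le>n. real (W n a) * (y gchoose a)) = y ^ n"
proof (induction n)
  case 0 then show ?case by simp
next
  case (Suc n)
  have "(\<Sum>a\<le>Suc n. real (W (Suc n) a) * (y gchoose a))
      = (\<Sum>a\<le>n. real (W (Suc n) (Suc a)) * (y gchoose (Suc a)))"
    by (subst sum.atMost_Suc_shift) simp
  also have "\<dots> = (\<Sum>a\<le>n. real (Suc a) * real (W n (Suc a)) * (y gchoose (Suc a))
              + real (Suc a) * real (W n a) * (y gchoose (Suc a)))"
    by (rule sum.cong) (simp_all only: W_Suc_Suc of_nat_mult of_nat_add distrib_left distrib_right)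
  also have "\<dots> = (\<Sum>a\<le>n. real (Suc a) * real (W n (Suc a)) * (y gchoose (Suc a)))
              + (\<Sum>a\<le>n. real (Suc a) * real (W n a) * (y gchoose (Suc a)))"
    by (rule sum.distrib)
  also have "(\<Sum>a\<le>n. real (Suc a) * real (W n (Suc a)) * (y gchoose (Suc a)))
      = (\<Sum>a\<le>n. real a * real (W n a) * (y gchoose a))"
  proof -
    have "(\<Sum>a\<le>Suc n. real a * real (W n a) * (y gchoose a))
        = (\<Sum>a\<le>n. real (Suc a) * real (W n (Suc a)) * (y gchoose (Suc a)))"
      by (subst sum.atMost_Suc_shift) simp
    moreover have "(\<Sum>a\<le>Suc n. real a * real (W n a) * (y gchoose a))
        = (\<Sum>a\<le>n. real a * real (W n a) * (y gchoose a))"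
      by simp
    ultimately show ?thesis by simp
  qed
  also have "(\<Sum>a\<le>n. real a * real (W n a) * (y gchoose a))
       + (\<Sum>a\<le>n. real (Suc a) * real (W n a) * (y gchoose (Suc a)))
       = (\<Sum>a\<le>n. real (W n a) * (y * (y gchoose a)))"
  proof -
    have e: "real a * w * (y gchoose a) + real (Suc a) * w * (y gchoose (Suc a)) = w * (y * (y gchoose a))"
      for w a by (subst gbinomial_mult_1) (simp add: algebra_simps)
    show ?thesis by (simp only: sum.distrib[symmetric] e)
  qed
  also have "\<dots> = y * y ^ n"
    by (simp add: Suc.IH[symmetric] sum_distrib_left algebra_simps)
  finally show ?case by simp
qed

lemma gchoose_minus_one: "((-1::real) gchoose a) = (-1) ^ a"
  by (subst gbinomial_negated_upper) (simp add: binomial_gbinomial[symmetric])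

lemma W_alt: "(\<Sum>a\<le>n. (-1::real) ^ a * real (W n a)) = (-1) ^ n"
  using W_binom_identity[of n "-1"]
  by (simp add: gchoose_minus_one mult.commute)

lemma W_rec: "W n (Suc a) = (\<Sum>t<n. (n choose t) * W t a)"
proof (induction n arbitrary: a)
  case 0 then show ?case by simp
next
  case (Suc n)
  define g where "g t = W t a" for t
  have split: "(\<Sum>t<Suc n. (Suc n choose t) * g t)
      = g n + (\<Sum>t<n. (n choose t) * g t) + (\<Sum>s<n. (n choose s) * g (Suc s))"
  proof -
    have "(\<Sum>t<Suc n. (Suc n choose t) * g t) = g 0 + (\<Sum>s<n. (Suc n choose Suc s) * g (Suc s))"
      by (subst sum.lessThan_Suc_shift) simp
    also have "\<dots> = g 0 + (\<Sum>s<n. (n choose Suc s) * g (Suc s)) + (\<Sum>s<n. (n choose s) * g (Suc s))"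
      by (simp add: sum.distrib algebra_simps)
    also have "g 0 + (\<Sum>s<n. (n choose Suc s) * g (Suc s)) = (\<Sum>t<Suc n. (n choose t) * g t)"
      by (subst sum.lessThan_Suc_shift) simp
    also have "\<dots> = g n + (\<Sum>t<n. (n choose t) * g t)" by simp
    finally show ?thesis by simp
  qed
  show ?case
  proof (cases a)
    case 0
    have "(\<Sum>s<n. (n choose s) * g (Suc s)) = 0" by (simp add: g_def 0)
    moreover have "g n + (\<Sum>t<n. (n choose t) * g t) = 1"
    proof (cases n)
      case 0 then show ?thesis by (simp add: g_def \<open>a = 0\<close>)
    next
      case (Suc m)
      have "(\<Sum>t<n. (n choose t) * g t) = (\<Sum>t<Suc m. (n choose t) * g t)" by (simp add: Suc)
      also have "\<dots> = 1" by (subst sum.lessThan_Suc_shift) (simp add: g_def \<open>a = 0\<close>)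
      finally show ?thesis using Suc by (simp add: g_def \<open>a = 0\<close>)
    qed
    ultimately have "(\<Sum>t<Suc n. (Suc n choose t) * W t a) = 1" using split by (simp add: g_def)
    moreover have "W (Suc n) (Suc a) = 1" unfolding W_def 0 by (simp only: Stirling_1) simp
    ultimately show ?thesis by simp
  next
    case (Suc b)
    have "(\<Sum>s<n. (n choose s) * g (Suc s)) = Suc b * ((\<Sum>s<n. (n choose s) * W s (Suc b)) + (\<Sum>s<n. (n choose s) * W s b))"
      by (simp add: g_def Suc W_Suc_Suc sum_distrib_left sum.distrib algebra_simps)
    also have "\<dots> = Suc b * (W n (Suc (Suc b)) + W n (Suc b))"
      using Suc.IH[of "Suc b"] Suc.IH[of b] by simp
    finally have A: "(\<Sum>s<n. (n choose s) * g (Suc s)) = Suc b * (W n (Suc (Suc b)) + W n (Suc b))" .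
    have B: "(\<Sum>t<n. (n choose t) * g t) = W n (Suc a)" using Suc.IH[of a] by (simp add: g_def)
    have C: "(\<Sum>t<Suc n. (Suc n choose t) * W t a) = W n a + W n (Suc a) + Suc b * (W n (Suc (Suc b)) + W n (Suc b))"
      using split A B by (simp add: g_def)
    have D: "W (Suc n) (Suc a) = Suc a * (W n (Suc a) + W n a)" by (rule W_Suc_Suc)
    show ?thesis using C D by (simp add: Suc algebra_simps)
  qed
qed

definition isch :: "'a set set \<Rightarrow> bool" where
  "isch C \<longleftrightarrow> (\<forall>x\<in>C. \<forall>y\<in>C. x \<subseteq> y \<or> y \<subseteq> x)"

lemma isch_subset: "isch C \<Longrightarrow> C' \<subseteq> C \<Longrightarrow> isch C'"
  unfolding isch_def by blast

lemma chain_Union_mem: "finite C \<Longrightarrow> C \<noteq> {} \<Longrightarrow> isch C \<Longrightarrow> \<Union>C \<in> C"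
proof (induction C rule: finite_ne_induct)
  case (singleton x) then show ?case by simp
next
  case (insert x F)
  have "isch F" using insert.prems isch_subset by blast
  then have U: "\<Union>F \<in> F" using insert.IH by blast
  then have "x \<subseteq> \<Union>F \<or> \<Union>F \<subseteq> x" using insert.prems unfolding isch_def by blast
  then show ?case using U by (auto simp: Un_absorb1 Un_absorb2)
qed

definition CH :: "'a set \<Rightarrow> nat \<Rightarrow> 'a set set set" where
  "CH \<sigma> a = {C. C \<subseteq> Pow \<sigma> - {{}} \<and> isch C \<and> \<Union>C = \<sigma> \<and> card C = a}"

lemma finite_CH: "finite \<sigma> \<Longrightarrow> finite (CH \<sigma> a)"
  unfolding CH_def by (rule finite_subset[of _ "Pow (Pow \<sigma>)"]) auto

lemma sum_pow_card:
  fixes h :: "nat \<Rightarrow> 'b::comm_semiring_1"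
  assumes "finite \<sigma>"
  shows "(\<Sum>\<tau>\<in>Pow \<sigma>. h (card \<tau>)) = (\<Sum>t\<le>card \<sigma>. of_nat (card \<sigma> choose t) * h t)"
proof -
  have "(\<Sum>\<tau>\<in>Pow \<sigma>. h (card \<tau>)) = (\<Sum>t\<le>card \<sigma>. \<Sum>\<tau>\<in>{\<tau>\<in>Pow \<sigma>. card \<tau> = t}. h (card \<tau>))"
    by (rule sum.group[symmetric]) (use assms in \<open>auto simp: card_mono\<close>)
  also have "\<dots> = (\<Sum>t\<le>card \<sigma>. of_nat (card \<sigma> choose t) * h t)"
  proof (rule sum.cong[OF refl])
    fix t
    have "{\<tau>\<in>Pow \<sigma>. card \<tau> = t} = {\<tau>. \<tau> \<subseteq> \<sigma> \<and> card \<tau> = t}" by auto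
    then have "card {\<tau>\<in>Pow \<sigma>. card \<tau> = t} = card \<sigma> choose t" using n_subsets[OF assms] by simp
    then show "(\<Sum>\<tau>\<in>{\<tau>\<in>Pow \<sigma>. card \<tau> = t}. h (card \<tau>)) = of_nat (card \<sigma> choose t) * h t"
      by simp
  qed
  finally show ?thesis .
qed

lemma CH_0: "finite \<sigma> \<Longrightarrow> CH \<sigma> 0 = (if \<sigma> = {} then {{}} else {})"
proof -
  assume f: "finite \<sigma>"
  have E: "C = {}" if "C \<in> CH \<sigma> 0" for C
  proof -
    have "C \<subseteq> Pow \<sigma>" using that unfolding CH_def by blast
    then have "finite C" by (meson f finite_Pow_iff finite_subset)
    moreover have "card C = 0" using that unfolding CH_def by blast
    ultimately show ?thesis by simp
  qed
  show ?thesis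
  proof (cases "\<sigma> = {}")
    case True
    have "{} \<in> CH \<sigma> 0" using True unfolding CH_def isch_def by simp
    then have "CH \<sigma> 0 = {{}}" using E by blast
    then show ?thesis using True by simp
  next
    case False
    have "C \<notin> CH \<sigma> 0" for C
    proof
      assume C: "C \<in> CH \<sigma> 0"
      then have "\<Union>C = \<sigma>" unfolding CH_def by blast
      then show False using E[OF C] False by simp
    qed
    then have "CH \<sigma> 0 = {}" by blast
    then show ?thesis using False by simp
  qed
qed

lemma CH_empty_Suc: "CH {} (Suc b) = {}"
  unfolding CH_def by auto

lemma CH_Suc_decomp:
  assumes f: "finite \<sigma>" and ne: "\<sigma> \<noteq> {}"
  shows "CH \<sigma> (Suc b) = (\<Union>\<tau>\<in>Pow \<sigma> - {\<sigma>}. insert \<sigma> ` CH \<tau> b)"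
proof
  show "CH \<sigma> (Suc b) \<subseteq> (\<Union>\<tau>\<in>Pow \<sigma> - {\<sigma>}. insert \<sigma> ` CH \<tau> b)"
  proof
    fix C assume C: "C \<in> CH \<sigma> (Suc b)"
    have fC: "finite C" using C f unfolding CH_def by (auto intro: finite_subset[of _ "Pow \<sigma>"])
    have neC: "C \<noteq> {}" using C unfolding CH_def by auto
    have ch: "isch C" and U: "\<Union>C = \<sigma>" and sub: "C \<subseteq> Pow \<sigma> - {{}}" and cC: "card C = Suc b"
      using C unfolding CH_def by auto
    have sC: "\<sigma> \<in> C" using chain_Union_mem[OF fC neC ch] U by simp
    define C' where "C' = C - {\<sigma>}"
    define \<tau> where "\<tau> = \<Union>C'"
    have "\<tau> \<subseteq> \<sigma>" using U unfolding \<tau>_def C'_def by blast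
    moreover have "\<tau> \<noteq> \<sigma>"
    proof (cases "C' = {}")
      case True then show ?thesis using ne unfolding \<tau>_def by simp
    next
      case False
      have "finite C'" using fC unfolding C'_def by simp
      moreover have "isch C'" using isch_subset[OF ch] unfolding C'_def by blast
      ultimately have "\<tau> \<in> C'" unfolding \<tau>_def using chain_Union_mem False by blast
      then show ?thesis unfolding C'_def by auto
    qed
    moreover have "C' \<in> CH \<tau> b"
    proof -
      have "isch C'" using isch_subset[OF ch] unfolding C'_def by blast
      moreover have "C' \<subseteq> Pow \<tau> - {{}}" using sub unfolding C'_def \<tau>_def by blast
      moreover have "card C' = b" using cC fC sC unfolding C'_def by (simp add: card_Diff_singleton)
      ultimately show ?thesis unfolding CH_def \<tau>_def by blast
    qed
    moreover have "C = insert \<sigma> C'" using sC unfolding C'_def by auto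
    ultimately show "C \<in> (\<Union>\<tau>\<in>Pow \<sigma> - {\<sigma>}. insert \<sigma> ` CH \<tau> b)" by blast
  qed
next
  show "(\<Union>\<tau>\<in>Pow \<sigma> - {\<sigma>}. insert \<sigma> ` CH \<tau> b) \<subseteq> CH \<sigma> (Suc b)"
  proof (rule subsetI)
    fix C assume "C \<in> (\<Union>\<tau>\<in>Pow \<sigma> - {\<sigma>}. insert \<sigma> ` CH \<tau> b)"
    then obtain \<tau> C' where t: "\<tau> \<subseteq> \<sigma>" "\<tau> \<noteq> \<sigma>" and C': "C' \<in> CH \<tau> b" and CC: "C = insert \<sigma> C'"
      by blast
    have ft: "finite \<tau>" using t f finite_subset by blast
    have fC': "finite C'" using C' ft unfolding CH_def by (auto intro: finite_subset[of _ "Pow \<tau>"])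
    have nm: "\<sigma> \<notin> C'" using C' t unfolding CH_def by auto
    have ch: "isch C'" and U: "\<Union>C' = \<tau>" and sub: "C' \<subseteq> Pow \<tau> - {{}}" and cC: "card C' = b"
      using C' unfolding CH_def by auto
    have "isch (insert \<sigma> C')" using ch sub t unfolding isch_def by blast
    moreover have "insert \<sigma> C' \<subseteq> Pow \<sigma> - {{}}" using sub t ne by auto
    moreover have "\<Union>(insert \<sigma> C') = \<sigma>" using U t by auto
    moreover have "card (insert \<sigma> C') = Suc b" using fC' nm cC by simp
    ultimately show "C \<in> CH \<sigma> (Suc b)" unfolding CH_def CC by blast
  qed
qed

lemma CH_card: "finite \<sigma> \<Longrightarrow> card (CH \<sigma> a) = W (card \<sigma>) a"
proof (induction \<sigma> arbitrary: a rule: finite_psubset_induct)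
  case (psubset \<sigma>)
  show ?case
  proof (cases a)
    case 0 then show ?thesis using CH_0[OF psubset.hyps(1)] psubset.hyps(1) by (simp add: W_n_0 card_gt_0_iff)
  next
    case (Suc b)
    show ?thesis
    proof (cases "\<sigma> = {}")
      case True then show ?thesis using Suc by (simp add: CH_empty_Suc)
    next
      case False
      note f = psubset.hyps(1)
      have "card (CH \<sigma> a) = card (\<Union>\<tau>\<in>Pow \<sigma> - {\<sigma>}. insert \<sigma> ` CH \<tau> b)"
        using CH_Suc_decomp[OF f False] Suc by simp
      also have "\<dots> = (\<Sum>\<tau>\<in>Pow \<sigma> - {\<sigma>}. card (insert \<sigma> ` CH \<tau> b))"
      proof (rule card_UN_disjoint)
        show "finite (Pow \<sigma> - {\<sigma>})" using f by simp
        show "\<forall>\<tau>\<in>Pow \<sigma> - {\<sigma>}. finite (insert \<sigma> ` CH \<tau> b)"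
          using f by (auto intro: finite_CH finite_subset)
        show "\<forall>\<tau>1\<in>Pow \<sigma> - {\<sigma>}. \<forall>\<tau>2\<in>Pow \<sigma> - {\<sigma>}. \<tau>1 \<noteq> \<tau>2 \<longrightarrow>
               insert \<sigma> ` CH \<tau>1 b \<inter> insert \<sigma> ` CH \<tau>2 b = {}"
        proof (intro ballI impI)
          fix \<tau>1 \<tau>2 assume t1: "\<tau>1 \<in> Pow \<sigma> - {\<sigma>}" and t2: "\<tau>2 \<in> Pow \<sigma> - {\<sigma>}" and ne: "\<tau>1 \<noteq> \<tau>2"
          show "insert \<sigma> ` CH \<tau>1 b \<inter> insert \<sigma> ` CH \<tau>2 b = {}"
          proof (rule ccontr)
            assume "insert \<sigma> ` CH \<tau>1 b \<inter> insert \<sigma> ` CH \<tau>2 b \<noteq> {}"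
            then obtain C1 C2 where c1: "C1 \<in> CH \<tau>1 b" and c2: "C2 \<in> CH \<tau>2 b" and eq: "insert \<sigma> C1 = insert \<sigma> C2"
              by blast
            have "\<sigma> \<notin> C1" using c1 t1 unfolding CH_def by auto
            moreover have "\<sigma> \<notin> C2" using c2 t2 unfolding CH_def by auto
            ultimately have "C1 = C2" using eq by (metis insert_ident)
            then show False using c1 c2 ne unfolding CH_def by auto
          qed
        qed
      qed
      also have "\<dots> = (\<Sum>\<tau>\<in>Pow \<sigma> - {\<sigma>}. W (card \<tau>) b)"
      proof (rule sum.cong[OF refl])
        fix \<tau> assume t: "\<tau> \<in> Pow \<sigma> - {\<sigma>}"
        have "inj_on (insert \<sigma>) (CH \<tau> b)"
        proof (rule inj_onI)
          fix C1 C2 assume "C1 \<in> CH \<tau> b" "C2 \<in> CH \<tau> b" "insert \<sigma> C1 = insert \<sigma> C2"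
          moreover have "\<sigma> \<notin> C1" "\<sigma> \<notin> C2" using t \<open>C1 \<in> CH \<tau> b\<close> \<open>C2 \<in> CH \<tau> b\<close> unfolding CH_def by auto
          ultimately show "C1 = C2" by (metis insert_ident)
        qed
        then have "card (insert \<sigma> ` CH \<tau> b) = card (CH \<tau> b)" by (rule card_image)
        also have "\<dots> = W (card \<tau>) b" using psubset.IH[of \<tau> b] t by auto
        finally show "card (insert \<sigma> ` CH \<tau> b) = W (card \<tau>) b" .
      qed
      also have "\<dots> = (\<Sum>\<tau>\<in>Pow \<sigma>. W (card \<tau>) b) - W (card \<sigma>) b"
        using f by (simp add: sum_diff1_nat)
      also have "(\<Sum>\<tau>\<in>Pow \<sigma>. W (card \<tau>) b) = (\<Sum>t\<le>card \<sigma>. (card \<sigma> choose t) * W t b)"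
        using sum_pow_card[OF f, of "\<lambda>t. W t b"] by simp
      also have "\<dots> = (\<Sum>t<card \<sigma>. (card \<sigma> choose t) * W t b) + W (card \<sigma>) b"
        by (simp add: lessThan_Suc_atMost[symmetric])
      finally show ?thesis using Suc W_rec by simp
    qed
  qed
qed

definition sc :: "hf set set \<Rightarrow> bool" where
  "sc D \<longleftrightarrow> finite D \<and> D \<noteq> {} \<and> (\<forall>\<sigma>\<in>D. finite \<sigma>) \<and> (\<forall>\<sigma>\<in>D. \<forall>\<tau>. \<tau> \<subseteq> \<sigma> \<longrightarrow> \<tau> \<in> D)"

definition gF :: "hf set \<Rightarrow> hf" where "gF \<sigma> = Face (Abs_fset \<sigma>)"

definition Ch :: "hf set set \<Rightarrow> hf set set set" where
  "Ch D = {C. finite C \<and> C \<subseteq> D - {{}} \<and> isch C}"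

definition fc :: "hf set set \<Rightarrow> nat \<Rightarrow> nat" where
  "fc D a = card {\<sigma>\<in>D. card \<sigma> = a}"

lemma bsd_eq: "bsd D = (\<lambda>C. gF ` C) ` Ch D"
  unfolding bsd_def Ch_def gF_def isch_def by blast

lemma gF_inj: "inj_on gF {\<sigma>. finite \<sigma>}"
proof (rule inj_onI)
  fix x y assume "x \<in> {\<sigma>. finite \<sigma>}" "y \<in> {\<sigma>. finite \<sigma>}" "gF x = gF y"
  then show "x = y" unfolding gF_def by (simp add: Abs_fset_inject)
qed

lemma sc_empty: "sc D \<Longrightarrow> {} \<in> D"
  unfolding sc_def by blast

lemma sc_finite_mem: "sc D \<Longrightarrow> \<sigma> \<in> D \<Longrightarrow> finite \<sigma>"
  unfolding sc_def by blast

lemma Ch_finite: "finite D \<Longrightarrow> finite (Ch D)"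
  unfolding Ch_def by (rule finite_subset[of _ "Pow D"]) auto

lemma gF_card: "sc D \<Longrightarrow> C \<in> Ch D \<Longrightarrow> card (gF ` C) = card C"
proof -
  assume "sc D" "C \<in> Ch D"
  then have "C \<subseteq> {\<sigma>. finite \<sigma>}" unfolding Ch_def sc_def by blast
  then have "inj_on gF C" using gF_inj inj_on_subset by blast
  then show ?thesis by (rule card_image)
qed

lemma gF_image_inj: "sc D \<Longrightarrow> inj_on (\<lambda>C. gF ` C) (Ch D)"
proof -
  assume "sc D"
  then have "\<Union>(Ch D) \<subseteq> {\<sigma>. finite \<sigma>}" unfolding Ch_def sc_def by blast
  then have "inj_on gF (\<Union>(Ch D))" using gF_inj inj_on_subset by blast
  then show ?thesis by (rule inj_on_image)
qed

lemma sc_bsd: assumes "sc D" shows "sc (bsd D)"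
proof -
  have fD: "finite D" using assms unfolding sc_def by blast
  have "finite (bsd D)" unfolding bsd_eq using Ch_finite[OF fD] by simp
  moreover have "{} \<in> bsd D"
  proof -
    have "{} \<in> Ch D" unfolding Ch_def isch_def by simp
    then show ?thesis unfolding bsd_eq by force
  qed
  moreover have "\<forall>s\<in>bsd D. finite s" unfolding bsd_eq Ch_def by auto
  moreover have "\<forall>s\<in>bsd D. \<forall>t. t \<subseteq> s \<longrightarrow> t \<in> bsd D"
  proof (intro ballI allI impI)
    fix s t assume s: "s \<in> bsd D" and t: "t \<subseteq> s"
    then obtain C where C: "C \<in> Ch D" and sC: "s = gF ` C" unfolding bsd_eq by blast
    define C' where "C' = {\<sigma>\<in>C. gF \<sigma> \<in> t}"
    have "t = gF ` C'" using t sC unfolding C'_def by blast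
    moreover have "C' \<in> Ch D" using C unfolding Ch_def C'_def by (auto intro: isch_subset)
    ultimately show "t \<in> bsd D" unfolding bsd_eq by blast
  qed
  ultimately show ?thesis unfolding sc_def by blast
qed

lemma Ch_card_decomp:
  assumes "sc D"
  shows "{C \<in> Ch D. card C = a} = (\<Union>\<sigma>\<in>D. CH \<sigma> a)"
proof
  show "{C \<in> Ch D. card C = a} \<subseteq> (\<Union>\<sigma>\<in>D. CH \<sigma> a)"
  proof (rule subsetI)
    fix C assume C: "C \<in> {C \<in> Ch D. card C = a}"
    have fC: "finite C" and sub: "C \<subseteq> D - {{}}" and ch: "isch C" and cC: "card C = a"
      using C unfolding Ch_def by auto
    have "\<Union>C \<in> D"
    proof (cases "C = {}")
      case True then show ?thesis using sc_empty[OF assms] by simp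
    next
      case False then show ?thesis using chain_Union_mem[OF fC False ch] sub by blast
    qed
    moreover have "C \<in> CH (\<Union>C) a" unfolding CH_def using sub ch cC by blast
    ultimately show "C \<in> (\<Union>\<sigma>\<in>D. CH \<sigma> a)" by blast
  qed
next
  show "(\<Union>\<sigma>\<in>D. CH \<sigma> a) \<subseteq> {C \<in> Ch D. card C = a}"
  proof (rule subsetI)
    fix C assume "C \<in> (\<Union>\<sigma>\<in>D. CH \<sigma> a)"
    then obtain \<sigma> where s: "\<sigma> \<in> D" and C: "C \<in> CH \<sigma> a" by blast
    have fs: "finite \<sigma>" using sc_finite_mem[OF assms s] .
    have sub: "C \<subseteq> Pow \<sigma> - {{}}" and ch: "isch C" and cC: "card C = a" using C unfolding CH_def by auto
    have "finite C" using sub fs by (meson Diff_subset finite_Pow_iff finite_subset)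
    moreover have "C \<subseteq> D - {{}}"
    proof
      fix x assume x: "x \<in> C"
      then have "x \<subseteq> \<sigma>" "x \<noteq> {}" using sub by auto
      moreover have "\<forall>\<tau>. \<tau> \<subseteq> \<sigma> \<longrightarrow> \<tau> \<in> D" using s assms unfolding sc_def by blast
      ultimately show "x \<in> D - {{}}" by blast
    qed
    ultimately show "C \<in> {C \<in> Ch D. card C = a}" using ch cC unfolding Ch_def by blast
  qed
qed

lemma fc_bsd: assumes "sc D" shows "fc (bsd D) a = (\<Sum>\<sigma>\<in>D. W (card \<sigma>) a)"
proof -
  have fD: "finite D" using assms unfolding sc_def by blast
  have "{s \<in> bsd D. card s = a} = (\<lambda>C. gF ` C) ` {C \<in> Ch D. card C = a}"
    unfolding bsd_eq using gF_card[OF assms] by auto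
  then have "fc (bsd D) a = card ((\<lambda>C. gF ` C) ` {C \<in> Ch D. card C = a})"
    unfolding fc_def by simp
  also have "\<dots> = card {C \<in> Ch D. card C = a}"
    by (rule card_image) (rule inj_on_subset[OF gF_image_inj[OF assms]], blast)
  also have "\<dots> = card (\<Union>\<sigma>\<in>D. CH \<sigma> a)" using Ch_card_decomp[OF assms] by simp
  also have "\<dots> = (\<Sum>\<sigma>\<in>D. card (CH \<sigma> a))"
  proof (rule card_UN_disjoint)
    show "finite D" by (rule fD)
    show "\<forall>\<sigma>\<in>D. finite (CH \<sigma> a)" using finite_CH sc_finite_mem[OF assms] by blast
    show "\<forall>\<sigma>1\<in>D. \<forall>\<sigma>2\<in>D. \<sigma>1 \<noteq> \<sigma>2 \<longrightarrow> CH \<sigma>1 a \<inter> CH \<sigma>2 a = {}"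
      unfolding CH_def by blast
  qed
  also have "\<dots> = (\<Sum>\<sigma>\<in>D. W (card \<sigma>) a)"
    using CH_card sc_finite_mem[OF assms] by (intro sum.cong) auto
  finally show ?thesis .
qed

lemma sum_by_card:
  fixes h :: "nat \<Rightarrow> 'b::comm_semiring_1"
  assumes "sc D" and T: "\<forall>\<sigma>\<in>D. card \<sigma> \<le> T"
  shows "(\<Sum>\<sigma>\<in>D. h (card \<sigma>)) = (\<Sum>b\<le>T. of_nat (fc D b) * h b)"
proof -
  have fD: "finite D" using assms unfolding sc_def by blast
  have "(\<Sum>\<sigma>\<in>D. h (card \<sigma>)) = (\<Sum>b\<le>T. \<Sum>\<sigma>\<in>{\<sigma>\<in>D. card \<sigma> = b}. h (card \<sigma>))"
    by (rule sum.group[symmetric]) (use fD T in auto)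
  also have "\<dots> = (\<Sum>b\<le>T. of_nat (fc D b) * h b)"
    unfolding fc_def by (intro sum.cong refl) simp
  finally show ?thesis .
qed

lemma fc_bsd_sum:
  assumes "sc D" and T: "\<forall>\<sigma>\<in>D. card \<sigma> \<le> T"
  shows "real (fc (bsd D) a) = (\<Sum>b\<le>T. real (W b a) * real (fc D b))"
proof -
  have "real (fc (bsd D) a) = (\<Sum>\<sigma>\<in>D. real (W (card \<sigma>) a))"
    using fc_bsd[OF assms(1)] by simp
  also have "\<dots> = (\<Sum>b\<le>T. real (fc D b) * real (W b a))"
    using sum_by_card[OF assms, of "\<lambda>b. real (W b a)"] by simp
  finally show ?thesis by (simp add: mult.commute)
qed

definition Tm :: "hf set set \<Rightarrow> nat" where "Tm D = Max (card ` D)"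

lemma Tm_ge: "sc D \<Longrightarrow> \<sigma> \<in> D \<Longrightarrow> card \<sigma> \<le> Tm D"
  unfolding Tm_def sc_def by (simp add: Max_ge)

lemma Tm_ex: "sc D \<Longrightarrow> \<exists>\<sigma>\<in>D. card \<sigma> = Tm D"
proof -
  assume "sc D"
  then have "finite (card ` D)" "card ` D \<noteq> {}" unfolding sc_def by auto
  then have "Tm D \<in> card ` D" unfolding Tm_def by (rule Max_in)
  then show ?thesis by auto
qed

lemma fc_pos_iff: "sc D \<Longrightarrow> fc D a > 0 \<longleftrightarrow> (\<exists>\<sigma>\<in>D. card \<sigma> = a)"
  unfolding fc_def sc_def by (auto simp: card_gt_0_iff)

lemma Tm_bsd: assumes "sc D" shows "Tm (bsd D) = Tm D"
proof -
  let ?T = "Tm D"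
  have T: "\<forall>\<sigma>\<in>D. card \<sigma> \<le> ?T" using Tm_ge[OF assms] by blast
  have sb: "sc (bsd D)" using sc_bsd[OF assms] .
  have le: "card s \<le> ?T" if s: "s \<in> bsd D" for s
  proof (rule ccontr)
    assume "\<not> card s \<le> ?T"
    then have "real (fc (bsd D) (card s)) = 0"
      using fc_bsd_sum[OF assms T, of "card s"] by (intro trans[OF _ sum.neutral]) auto
    moreover have "fc (bsd D) (card s) > 0" using fc_pos_iff[OF sb] s by blast
    ultimately show False by simp
  qed
  have "real (fc (bsd D) ?T) \<ge> real (W ?T ?T) * real (fc D ?T)"
    unfolding fc_bsd_sum[OF assms T]
    by (rule member_le_sum) auto
  moreover have "fc D ?T > 0" using fc_pos_iff[OF assms] Tm_ex[OF assms] by blast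
  moreover have "W ?T ?T > 0" by simp
  ultimately have "fc (bsd D) ?T > 0"
    by (metis less_le_trans of_nat_0_less_iff of_nat_mult nat_0_less_mult_iff of_nat_le_iff)
  then obtain s where s: "s \<in> bsd D" "card s = ?T" using fc_pos_iff[OF sb] by blast
  show ?thesis
  proof (rule antisym)
    show "Tm (bsd D) \<le> ?T" using Tm_ex[OF sb] le by metis
    show "?T \<le> Tm (bsd D)" using Tm_ge[OF sb s(1)] s(2) by simp
  qed
qed

lemma iter_props:
  assumes "sc D"
  shows "sc ((bsd ^^ k) D) \<and> Tm ((bsd ^^ k) D) = Tm D"
  by (induction k) (use assms sc_bsd Tm_bsd in auto)

lemma fcoef_nat: "fcoef (int a - 1) (int b - 1) = real (W b a)"
proof -
  have n: "nat (int n + 1) = Suc n" for n by simp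
  show ?thesis by (cases a; cases b) (simp_all add: fcoef_def W_def n Stirling.simps(1-3) del: Stirling.simps(4) fact_Suc)
qed

definition E :: "nat \<Rightarrow> nat \<Rightarrow> real" where
  "E T a = Fcoef (int a - 1) (int T - 1)"

lemma sum_int_reindex:
  "(\<Sum>j\<in>{int a..int T - 1}. f j) = (\<Sum>b\<in>{Suc a..T}. f (int b - 1))"
  by (rule sum.reindex_bij_witness[of _ "\<lambda>b. int b - 1" "\<lambda>j. nat (j+1)"]) auto

lemma E_same: "T \<ge> 1 \<Longrightarrow> E T T = 1"
  unfolding E_def by (subst Fcoef.simps) simp

lemma E_rec:
  assumes "T \<ge> 2" "a < T"
  shows "(fact T - fact a) * E T a = (\<Sum>b\<in>{Suc a..T}. real (W b a) * E T b)"
proof -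
  have "fact a < (fact T :: real)"
  proof (cases a)
    case 0 then show ?thesis using assms fact_less_mono[of 1 T] by (simp add: fact_ge_1)
  next
    case (Suc m) then show ?thesis using assms fact_less_mono[of a T] by simp
  qed
  then have ne: "(fact T - fact a :: real) \<noteq> 0" by simp
  have "E T a = 1 / (fact (nat (int T - 1 + 1)) - fact (nat (int a - 1 + 1))) *
      (\<Sum>j\<in>{int a - 1 + 1..int T - 1}. fcoef (int a - 1) j * Fcoef j (int T - 1))"
    unfolding E_def using assms by (subst Fcoef.simps) simp
  also have "\<dots> = 1 / (fact T - fact a) * (\<Sum>b\<in>{Suc a..T}. real (W b a) * E T b)"
    by (simp add: sum_int_reindex fcoef_nat E_def)
  finally show ?thesis using ne by (simp add: field_simps)
qed

lemma sum_split_at: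
  fixes f :: "nat \<Rightarrow> real"
  assumes "a \<le> T"
  shows "(\<Sum>b\<le>T. f b) = (\<Sum>b<a. f b) + f a + (\<Sum>b\<in>{Suc a..T}. f b)"
proof -
  have e: "{..T} = {..a} \<union> {Suc a..T}" using assms by auto
  have "sum f ({..a} \<union> {Suc a..T}) = sum f {..a} + sum f {Suc a..T}"
    by (rule sum.union_disjoint) auto
  moreover have "sum f {..a} = sum f {..<a} + f a" by (simp add: lessThan_Suc_atMost[symmetric])
  ultimately show ?thesis using e by simp
qed

lemma E_eig:
  assumes "T \<ge> 2" "a \<le> T"
  shows "(\<Sum>b\<le>T. real (W b a) * E T b) = fact T * E T a"
proof (cases "a = T")
  case True
  have "(\<Sum>b\<le>T. real (W b a) * E T b) = (\<Sum>b<T. real (W b a) * E T b) + real (W T a) * E T T"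
    by (simp add: lessThan_Suc_atMost[symmetric])
  also have "(\<Sum>b<T. real (W b a) * E T b) = 0" using True by (intro sum.neutral) auto
  finally show ?thesis using True by simp
next
  case False
  then have lt: "a < T" using assms by simp
  have "(\<Sum>b\<le>T. real (W b a) * E T b) = (\<Sum>b<a. real (W b a) * E T b) + real (W a a) * E T a
          + (\<Sum>b\<in>{Suc a..T}. real (W b a) * E T b)"
    by (rule sum_split_at) (use assms in simp)
  also have "(\<Sum>b<a. real (W b a) * E T b) = 0" by (intro sum.neutral) auto
  also have "(\<Sum>b\<in>{Suc a..T}. real (W b a) * E T b) = (fact T - fact a) * E T a"
    using E_rec[OF assms(1) lt] by simp
  finally show ?thesis by (simp add: algebra_simps)
qed

lemma fact_lt_T: "T \<ge> 2 \<Longrightarrow> a < T \<Longrightarrow> (fact a :: real) < fact T"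
proof (cases a)
  case 0 then show "T \<ge> 2 \<Longrightarrow> a < T \<Longrightarrow> (fact a :: real) < fact T"
    using fact_less_mono[of 1 T] by (simp add: fact_ge_1)
next
  case (Suc m) then show "T \<ge> 2 \<Longrightarrow> a < T \<Longrightarrow> (fact a :: real) < fact T"
    using fact_less_mono[of a T] by simp
qed

lemma E_zero: "T \<ge> 2 \<Longrightarrow> E T 0 = 0"
proof -
  assume T: "T \<ge> 2"
  have "(fact T - fact 0) * E T 0 = 0"
    using E_rec[OF T, of 0] T by (simp add: W_n_0)
  moreover have "(fact T - fact 0 :: real) \<noteq> 0" using fact_lt_T[OF T, of 0] T by simp
  ultimately show ?thesis by simp
qed

lemma E_nonneg:
  assumes T: "T \<ge> 2" and a: "a \<le> T"
  shows "E T a \<ge> 0"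
proof -
  have "\<forall>b\<in>{a..T}. E T b \<ge> 0"
    using a
  proof (induction a rule: inc_induct)
    case base then show ?case using T E_same by simp
  next
    case (step n)
    have "(fact T - fact n) * E T n \<ge> 0"
      unfolding E_rec[OF T step.hyps(2)] using step.IH by (intro sum_nonneg) auto
    moreover have "(fact T - fact n :: real) > 0" using fact_lt_T[OF T step.hyps(2)] by simp
    ultimately have "E T n \<ge> 0" by (simp add: zero_le_mult_iff)
    then show ?case using step.IH by (metis atLeastAtMost_iff le_antisym not_less_eq_eq)
  qed
  then show ?thesis using a by simp
qed

lemma E_one_pos: assumes T: "T \<ge> 2" shows "E T 1 > 0"
proof -
  have "(fact T - fact 1) * E T 1 = (\<Sum>b\<in>{Suc 1..T}. real (W b 1) * E T b)"
    using E_rec[OF T, of 1] T by simp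
  also have "\<dots> \<ge> real (W T 1) * E T T"
  proof (rule member_le_sum)
    show "T \<in> {Suc 1..T}" using T by simp
    fix x assume "x \<in> {Suc 1..T} - {T}"
    then show "0 \<le> real (W x 1) * E T x" using E_nonneg[OF T, of x] by simp
  qed simp
  also have "real (W T 1) * E T T = 1"
  proof -
    obtain m where "T = Suc m" using T by (cases T) auto
    then show ?thesis using E_same T by (simp add: W_def del: Stirling.simps)
  qed
  finally have ge: "(fact T - fact 1) * E T 1 \<ge> 1" .
  have pos: "(fact T - fact 1 :: real) > 0" using fact_lt_T[OF T, of 1] T by simp
  show ?thesis
  proof (rule ccontr)
    assume "\<not> E T 1 > 0"
    then have "E T 1 \<le> 0" by simp
    then have "(fact T - fact 1) * E T 1 \<le> 0" using pos by (simp add: mult_nonneg_nonpos)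
    then show False using ge by simp
  qed
qed

lemma L_binom:
  fixes X :: "nat \<Rightarrow> real"
  shows "(\<Sum>a\<le>T. (\<Sum>b\<le>T. real (W b a) * X b) * (y gchoose a)) = (\<Sum>b\<le>T. X b * y ^ b)"
proof -
  have "(\<Sum>a\<le>T. (\<Sum>b\<le>T. real (W b a) * X b) * (y gchoose a))
      = (\<Sum>b\<le>T. X b * (\<Sum>a\<le>T. real (W b a) * (y gchoose a)))"
    unfolding sum_distrib_right sum_distrib_left by (subst sum.swap) (simp add: algebra_simps)
  also have "\<dots> = (\<Sum>b\<le>T. X b * y ^ b)"
  proof (rule sum.cong[OF refl])
    fix b assume b: "b \<in> {..T}"
    have "(\<Sum>a\<le>T. real (W b a) * (y gchoose a)) = (\<Sum>a\<le>b. real (W b a) * (y gchoose a))"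
      using b by (intro sum.mono_neutral_right) auto
    then show "X b * (\<Sum>a\<le>T. real (W b a) * (y gchoose a)) = X b * y ^ b"
      by (simp add: W_binom_identity)
  qed
  finally show ?thesis .
qed

lemma binom_indep:
  fixes Z :: "nat \<Rightarrow> real"
  assumes Z: "\<And>y::real. (\<Sum>a\<le>T. Z a * (y gchoose a)) = 0"
  shows "a \<le> T \<Longrightarrow> Z a = 0"
proof (induction a rule: less_induct)
  case (less a)
  have "0 = (\<Sum>c\<le>T. Z c * (real a gchoose c))" using Z by simp
  also have "\<dots> = Z a * (real a gchoose a) + (\<Sum>c\<in>{..T} - {a}. Z c * (real a gchoose c))"
    using less.prems by (subst sum.remove[of _ a]) auto
  also have "(\<Sum>c\<in>{..T} - {a}. Z c * (real a gchoose c)) = 0"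
  proof (intro sum.neutral ballI)
    fix c assume c: "c \<in> {..T} - {a}"
    show "Z c * (real a gchoose c) = 0"
    proof (cases "c < a")
      case True then show ?thesis using less.IH[of c] c less.prems by simp
    next
      case False then have "a < c" using c by simp
      then show ?thesis by (simp add: binomial_gbinomial[symmetric])
    qed
  qed
  finally show ?case by (simp add: binomial_gbinomial[symmetric])
qed

lemma eig_unique:
  fixes X :: "nat \<Rightarrow> real"
  assumes T: "T \<ge> 2" and eig: "\<And>a. a \<le> T \<Longrightarrow> (\<Sum>b\<le>T. real (W b a) * X b) = fact T * X a"
    and XT: "X T = 0" and a: "a \<le> T"
  shows "X a = 0"
proof -
  have "\<forall>b\<in>{a..T}. X b = 0"
    using a
  proof (induction a rule: inc_induct)
    case base then show ?case using XT by simp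
  next
    case (step n)
    have "(\<Sum>b\<le>T. real (W b n) * X b) = (\<Sum>b<n. real (W b n) * X b) + real (W n n) * X n
          + (\<Sum>b\<in>{Suc n..T}. real (W b n) * X b)"
      by (rule sum_split_at) (use step.hyps in simp)
    also have "(\<Sum>b<n. real (W b n) * X b) = 0" by (intro sum.neutral) auto
    also have "(\<Sum>b\<in>{Suc n..T}. real (W b n) * X b) = 0" using step.IH by (intro sum.neutral) auto
    finally have s1: "(\<Sum>b\<le>T. real (W b n) * X b) = fact n * X n" by simp
    have "fact n * X n = fact T * X n" using s1 eig[of n, OF less_imp_le[OF step.hyps(2)]] by linarith
    then have "X n = 0" using fact_lt_T[OF T step.hyps(2)] by (metis mult_right_cancel order_less_irrefl)
    then show ?case using step.IH by (metis atLeastAtMost_iff le_antisym not_less_eq_eq)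
  qed
  then show ?thesis using a by simp
qed

lemma E_poly:
  assumes T: "T \<ge> 2"
  shows "fact T * (\<Sum>a\<le>T. E T a * (y gchoose a)) = (\<Sum>b\<le>T. E T b * y ^ b)"
proof -
  have "(\<Sum>b\<le>T. E T b * y ^ b) = (\<Sum>a\<le>T. (\<Sum>b\<le>T. real (W b a) * E T b) * (y gchoose a))"
    using L_binom[where X="E T" and T=T and y=y] by simp
  also have "\<dots> = (\<Sum>a\<le>T. fact T * E T a * (y gchoose a))"
    using E_eig[OF T] by (intro sum.cong) auto
  finally show ?thesis by (simp add: sum_distrib_left algebra_simps)
qed

lemma E_alt: assumes T: "T \<ge> 2" shows "(\<Sum>a\<le>T. (-1)^a * E T a) = 0"
proof -
  have "fact T * (\<Sum>a\<le>T. E T a * (-1)^a) = (\<Sum>a\<le>T. E T a * (-1)^a)"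
    using E_poly[OF T, of "-1"] by (simp add: gchoose_minus_one)
  moreover have "(fact T :: real) \<noteq> 1" using fact_lt_T[OF T, of 1] T by simp
  ultimately have "(\<Sum>a\<le>T. E T a * (-1)^a) = 0"
    by (metis mult_cancel_right1 mult.commute)
  then show ?thesis by (simp add: mult.commute)
qed

definition G :: "nat \<Rightarrow> nat \<Rightarrow> real" where
  "G T c = (-1)^T * (\<Sum>b\<le>T. E T b * (-1)^b * real (b choose c))"

lemma choose_sum_ext:
  fixes h :: "nat \<Rightarrow> real"
  assumes "b \<le> T"
  shows "(\<Sum>c\<le>T. real (b choose c) * h c) = (\<Sum>c\<le>b. real (b choose c) * h c)"
  using assms by (intro sum.mono_neutral_right) auto

lemma G_poly: "(\<Sum>c\<le>T. G T c * y ^ c) = (-1)^T * (\<Sum>b\<le>T. E T b * (-1 - y) ^ b)"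
proof -
  have "(\<Sum>c\<le>T. G T c * y ^ c) = (-1)^T * (\<Sum>b\<le>T. E T b * (-1)^b * (\<Sum>c\<le>T. real (b choose c) * y ^ c))"
    unfolding G_def sum_distrib_left sum_distrib_right
    by (subst sum.swap) (simp add: algebra_simps)
  also have "\<dots> = (-1)^T * (\<Sum>b\<le>T. E T b * (-1 - y) ^ b)"
  proof -
    have "E T b * (-1)^b * (\<Sum>c\<le>T. real (b choose c) * y ^ c) = E T b * (-1 - y) ^ b" if "b \<le> T" for b
    proof -
      have "(\<Sum>c\<le>T. real (b choose c) * y ^ c) = (\<Sum>c\<le>b. real (b choose c) * y ^ c)"
        by (rule choose_sum_ext[OF that])
      also have "\<dots> = (y + 1) ^ b" by (simp add: binomial_ring)
      finally have "(\<Sum>c\<le>T. real (b choose c) * y ^ c) = (y + 1) ^ b" .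
      moreover have "(-1::real)^b * (y + 1) ^ b = (-1 - y) ^ b"
      proof -
        have "(-1::real)^b * (y + 1) ^ b = ((-1) * (y + 1)) ^ b" by (rule power_mult_distrib[symmetric])
        also have "(-1) * (y + 1) = -1 - y" by simp
        finally show ?thesis .
      qed
      ultimately show ?thesis by (simp add: mult.assoc)
    qed
    then show ?thesis by (intro arg_cong[where f="\<lambda>x. (-1)^T * x"] sum.cong) auto
  qed
  finally show ?thesis .
qed

lemma vander: "(\<Sum>c\<le>b. real (b choose c) * (y gchoose c)) = ((y + real b) gchoose b)"
proof -
  have "((y + real b) gchoose b) = (\<Sum>k=0..b. (y gchoose k) * (real b gchoose (b - k)))"
    using gbinomial_Vandermonde[of y "real b" b] by simp
  also have "\<dots> = (\<Sum>c\<le>b. real (b choose c) * (y gchoose c))"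
  proof (rule sum.cong)
    show "{0..b} = {..b}" by auto
    fix k assume "k \<in> {..b}"
    then have "(real b gchoose (b - k)) = real (b choose k)"
      by (simp add: binomial_gbinomial[symmetric] binomial_symmetric[symmetric])
    then show "(y gchoose k) * (real b gchoose (b - k)) = real (b choose k) * (y gchoose k)" by simp
  qed
  finally show ?thesis by simp
qed

lemma neg_gchoose: "(-1::real)^b * ((y + real b) gchoose b) = ((-1 - y) gchoose b)"
proof -
  have "((-1 - y) gchoose b) = (-1)^b * ((of_nat b - (-1 - y) - 1) gchoose b)"
    by (rule gbinomial_negated_upper)
  also have "of_nat b - (-1 - y) - 1 = y + real b" by simp
  finally show ?thesis by simp
qed

lemma G_binom: "(\<Sum>c\<le>T. G T c * (y gchoose c)) = (-1)^T * (\<Sum>b\<le>T. E T b * ((-1 - y) gchoose b))"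
proof -
  have "(\<Sum>c\<le>T. G T c * (y gchoose c)) = (-1)^T * (\<Sum>b\<le>T. E T b * (-1)^b * (\<Sum>c\<le>T. real (b choose c) * (y gchoose c)))"
    unfolding G_def sum_distrib_left sum_distrib_right
    by (subst sum.swap) (simp add: algebra_simps)
  also have "\<dots> = (-1)^T * (\<Sum>b\<le>T. E T b * ((-1 - y) gchoose b))"
  proof -
    have "E T b * (-1)^b * (\<Sum>c\<le>T. real (b choose c) * (y gchoose c)) = E T b * ((-1 - y) gchoose b)" if "b \<le> T" for b
    proof -
      have "(\<Sum>c\<le>T. real (b choose c) * (y gchoose c)) = (\<Sum>c\<le>b. real (b choose c) * (y gchoose c))"
        by (rule choose_sum_ext[OF that])
      also have "\<dots> = ((y + real b) gchoose b)" by (rule vander)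
      finally show ?thesis using neg_gchoose[of b y] by (simp add: mult.assoc)
    qed
    then show ?thesis by (intro arg_cong[where f="\<lambda>x. (-1)^T * x"] sum.cong) auto
  qed
  finally show ?thesis .
qed

lemma G_eig:
  assumes T: "T \<ge> 2" and a: "a \<le> T"
  shows "(\<Sum>b\<le>T. real (W b a) * G T b) = fact T * G T a"
proof -
  have key: "fact T * (\<Sum>c\<le>T. G T c * (y gchoose c)) = (\<Sum>c\<le>T. G T c * y ^ c)" for y :: real
  proof -
    have "fact T * (\<Sum>c\<le>T. G T c * (y gchoose c)) = (-1)^T * (fact T * (\<Sum>b\<le>T. E T b * ((-1 - y) gchoose b)))"
      unfolding G_binom by (simp add: algebra_simps)
    also have "\<dots> = (-1)^T * (\<Sum>b\<le>T. E T b * (-1 - y) ^ b)"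
      using E_poly[OF T, of "-1 - y"] by simp
    also have "\<dots> = (\<Sum>c\<le>T. G T c * y ^ c)" by (simp add: G_poly)
    finally show ?thesis .
  qed
  define Z where "Z a = fact T * G T a - (\<Sum>b\<le>T. real (W b a) * G T b)" for a
  have "(\<Sum>a\<le>T. Z a * (y gchoose a)) = 0" for y :: real
  proof -
    have "(\<Sum>a\<le>T. Z a * (y gchoose a)) = fact T * (\<Sum>a\<le>T. G T a * (y gchoose a))
          - (\<Sum>a\<le>T. (\<Sum>b\<le>T. real (W b a) * G T b) * (y gchoose a))"
      unfolding Z_def by (simp add: sum_distrib_left sum_subtractf algebra_simps)
    also have "\<dots> = 0" using key[of y] L_binom[where X="G T" and T=T and y=y] by simp
    finally show ?thesis .
  qed
  then have "Z a = 0" using binom_indep a by blast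
  then show ?thesis unfolding Z_def by simp
qed

lemma G_T: assumes T: "T \<ge> 2" shows "G T T = E T T"
proof -
  have "(\<Sum>b\<le>T. E T b * (-1)^b * real (b choose T)) = (\<Sum>b<T. E T b * (-1)^b * real (b choose T)) + E T T * (-1)^T"
    by (simp add: lessThan_Suc_atMost[symmetric])
  also have "(\<Sum>b<T. E T b * (-1)^b * real (b choose T)) = 0" by (intro sum.neutral) auto
  finally show ?thesis unfolding G_def by (simp add: power_mult_distrib[symmetric])
qed

lemma G_eq_E: assumes T: "T \<ge> 2" and a: "a \<le> T" shows "G T a = E T a"
proof -
  have "(\<lambda>c. G T c - E T c) a = 0"
  proof (rule eig_unique[OF T _ _ a])
    fix a' assume a': "a' \<le> T"
    show "(\<Sum>b\<le>T. real (W b a') * (G T b - E T b)) = fact T * (G T a' - E T a')"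
      using G_eig[OF T a'] E_eig[OF T a'] by (simp add: algebra_simps sum_subtractf)
  next
    show "G T T - E T T = 0" using G_T[OF T] by simp
  qed
  then show ?thesis by simp
qed

lemma pow_aux: "(-1::real)^(a+m+1) * (-1)^a = - ((-1)^m)"
  by (induction a) simp_all

lemma sgn_aux:
  assumes "a \<le> T"
  shows "real (T - a) * (-1::real) ^ (T - a - 1) = (-1)^T * ((real a - real T) * (-1)^a)"
proof (cases "a = T")
  case True then show ?thesis by simp
next
  case False
  then have "a < T" using assms by simp
  then obtain m where m: "T = a + m + 1" using less_imp_Suc_add by fastforce
  have e1: "T - a - 1 = m" using m by simp
  have e2: "real (T - a) = real m + 1" using m by simp
  have e3: "real a - real T = - (real m + 1)" using m by simp
  have "(-1)^T * ((real a - real T) * (-1::real)^a) = - (real m + 1) * ((-1)^(a+m+1) * (-1)^a)"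
    unfolding e3 by (subst m) (simp only: mult_ac)
  also have "\<dots> = (real m + 1) * (-1)^m" unfolding pow_aux by (simp add: algebra_simps)
  finally show ?thesis unfolding e1 e2 by simp
qed

lemma E_lin:
  assumes T: "T \<ge> 2"
  shows "(\<Sum>a\<le>T. E T a * real (T - a) * (-1) ^ (T - a - 1)) = E T 1"
proof -
  have "(\<Sum>a\<le>T. E T a * real (T - a) * (-1) ^ (T - a - 1))
      = (\<Sum>a\<le>T. (-1)^T * (real a * (-1)^a * E T a) - (-1)^T * real T * ((-1)^a * E T a))"
  proof (rule sum.cong[OF refl])
    fix x assume "x \<in> {..T}"
    then have "x \<le> T" by simp
    have "E T x * real (T - x) * (-1) ^ (T - x - 1) = E T x * (real (T - x) * (-1) ^ (T - x - 1))"
      by (simp only: mult.assoc)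
    also have "\<dots> = E T x * ((-1)^T * ((real x - real T) * (-1)^x))" using sgn_aux[OF \<open>x \<le> T\<close>] by simp
    also have "\<dots> = (-1)^T * (real x * (-1)^x * E T x) - (-1)^T * real T * ((-1)^x * E T x)"
      by (simp add: algebra_simps)
    finally show "E T x * real (T - x) * (-1) ^ (T - x - 1) = (-1)^T * (real x * (-1)^x * E T x) - (-1)^T * real T * ((-1)^x * E T x)" .
  qed
  also have "\<dots> = (-1)^T * (\<Sum>a\<le>T. real a * (-1)^a * E T a) - (-1)^T * real T * (\<Sum>a\<le>T. (-1)^a * E T a)"
    by (simp only: sum_subtractf sum_distrib_left)
  also have "\<dots> = (-1)^T * (\<Sum>a\<le>T. real a * (-1)^a * E T a)" using E_alt[OF T] by simp
  also have "\<dots> = G T 1" unfolding G_def by (simp add: sum_distrib_left algebra_simps)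
  also have "\<dots> = E T 1" using G_eq_E[OF T] T by simp
  finally show ?thesis .
qed

lemma rec_conv:
  fixes u e :: "nat \<Rightarrow> real"
  assumes rec: "\<And>k. u (Suc k) = r * u k + e k" and r: "0 \<le> r" "r < 1" and e: "e \<longlonglongrightarrow> 0"
  shows "u \<longlonglongrightarrow> 0"
proof (rule LIMSEQ_I)
  fix \<epsilon> :: real assume \<epsilon>: "\<epsilon> > 0"
  have "\<epsilon> * (1 - r) / 2 > 0" using \<epsilon> r by simp
  then obtain N where N: "\<And>k. k \<ge> N \<Longrightarrow> norm (e k) < \<epsilon> * (1 - r) / 2"
    using LIMSEQ_D[OF e] by fastforce
  define w where "w k = \<bar>u k\<bar> - \<epsilon> / 2" for k
  have step: "w (Suc k) \<le> r * w k" if "k \<ge> N" for k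
  proof -
    have "\<bar>u (Suc k)\<bar> \<le> r * \<bar>u k\<bar> + \<bar>e k\<bar>" unfolding rec using r by (simp add: abs_mult abs_triangle_ineq[THEN order_trans])
    moreover have "\<bar>e k\<bar> < \<epsilon> * (1 - r) / 2" using N[OF that] by simp
    ultimately show ?thesis unfolding w_def by (simp add: algebra_simps)
  qed
  define W0 where "W0 = max (w N) 0"
  have bound: "w (N + m) \<le> r ^ m * W0" for m
  proof (induction m)
    case 0 then show ?case unfolding W0_def by simp
  next
    case (Suc m)
    have "w (N + Suc m) \<le> r * w (N + m)" using step[of "N + m"] by simp
    also have "\<dots> \<le> r * (r ^ m * W0)" using Suc.IH r by (intro mult_left_mono) auto
    finally show ?case by simp
  qed
  have "(\<lambda>m. r ^ m * W0) \<longlonglongrightarrow> 0 * W0"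
    by (intro tendsto_mult LIMSEQ_power_zero tendsto_const) (use r in simp)
  then obtain M where M: "\<And>m. m \<ge> M \<Longrightarrow> norm (r ^ m * W0 - 0) < \<epsilon> / 2"
    using LIMSEQ_D[of "\<lambda>m. r ^ m * W0" 0 "\<epsilon>/2"] \<epsilon> by fastforce
  show "\<exists>no. \<forall>n\<ge>no. norm (u n - 0) < \<epsilon>"
  proof (intro exI allI impI)
    fix n assume n: "n \<ge> N + M"
    then obtain m where m: "n = N + m" "m \<ge> M" by (metis add_le_imp_le_left le_add1 le_iff_add add.assoc)
    have "w n \<le> r ^ m * W0" using bound m by simp
    moreover have "r ^ m * W0 < \<epsilon> / 2" using M[OF m(2)] by simp
    ultimately show "norm (u n - 0) < \<epsilon>" unfolding w_def by simp
  qed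
qed

locale fseq =
  fixes v :: "nat \<Rightarrow> nat \<Rightarrow> real" and T :: nat
  assumes T: "T \<ge> 2"
    and vrec: "\<And>k a. v (Suc k) a = (\<Sum>b\<le>T. real (W b a) * v k b)"
begin

definition lam :: real where "lam = fact T"

lemma lam_pos: "lam > 0" unfolding lam_def by simp

lemma vT: "v k T = lam ^ k * v 0 T"
proof (induction k)
  case 0 then show ?case by simp
next
  case (Suc k)
  have "v (Suc k) T = (\<Sum>b<T. real (W b T) * v k b) + real (W T T) * v k T"
    unfolding vrec by (simp add: lessThan_Suc_atMost[symmetric])
  also have "(\<Sum>b<T. real (W b T) * v k b) = 0" by (intro sum.neutral) auto
  finally show ?case using Suc by (simp add: lam_def)
qed

definition g :: "nat \<Rightarrow> nat \<Rightarrow> real" where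
  "g k a = v k a - lam ^ k * v 0 T * E T a"

lemma g_rec: "a \<le> T \<Longrightarrow> g (Suc k) a = (\<Sum>b\<le>T. real (W b a) * g k b)"
proof -
  assume a: "a \<le> T"
  have "(\<Sum>b\<le>T. real (W b a) * g k b) = (\<Sum>b\<le>T. real (W b a) * v k b)
        - lam ^ k * v 0 T * (\<Sum>b\<le>T. real (W b a) * E T b)"
    unfolding g_def by (simp add: sum_subtractf sum_distrib_left algebra_simps)
  also have "(\<Sum>b\<le>T. real (W b a) * E T b) = lam * E T a" using E_eig[OF T a] by (simp add: lam_def)
  finally show ?thesis unfolding g_def vrec by (simp add: algebra_simps)
qed

lemma g_T: "g k T = 0"
  unfolding g_def using vT[of k] E_same[of T] T by simp

lemma g_conv: "a \<le> T \<Longrightarrow> (\<lambda>k. g k a / lam ^ k) \<longlonglongrightarrow> 0"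
proof -
  assume a: "a \<le> T"
  have "\<forall>b\<in>{a..T}. (\<lambda>k. g k b / lam ^ k) \<longlonglongrightarrow> 0"
    using a
  proof (induction a rule: inc_induct)
    case base then show ?case by (simp add: g_T)
  next
    case (step n)
    define e where "e k = (\<Sum>b\<in>{Suc n..T}. real (W b n) * (g k b / lam ^ k)) / lam" for k
    have "e \<longlonglongrightarrow> (\<Sum>b\<in>{Suc n..T}. real (W b n) * 0) / lam"
      unfolding e_def using step.IH lam_pos by (intro tendsto_divide tendsto_sum tendsto_mult tendsto_const) auto
    then have e0: "e \<longlonglongrightarrow> 0" by simp
    have rec: "g (Suc k) n / lam ^ Suc k = (fact n / lam) * (g k n / lam ^ k) + e k" for k
    proof -
      have "g (Suc k) n = (\<Sum>b<n. real (W b n) * g k b) + real (W n n) * g k n + (\<Sum>b\<in>{Suc n..T}. real (W b n) * g k b)"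
        unfolding g_rec[OF less_imp_le[OF step.hyps(2)]] by (rule sum_split_at) (use step.hyps in simp)
      also have "(\<Sum>b<n. real (W b n) * g k b) = 0" by (intro sum.neutral) auto
      finally have "g (Suc k) n = fact n * g k n + (\<Sum>b\<in>{Suc n..T}. real (W b n) * g k b)" by simp
      then have "g (Suc k) n / lam ^ Suc k = (fact n * g k n + (\<Sum>b\<in>{Suc n..T}. real (W b n) * g k b)) / (lam * lam ^ k)"
        by simp
      also have "\<dots> = (fact n / lam) * (g k n / lam ^ k) + (\<Sum>b\<in>{Suc n..T}. real (W b n) * g k b) / lam ^ k / lam"
        using lam_pos by (simp add: field_simps)
      also have "(\<Sum>b\<in>{Suc n..T}. real (W b n) * g k b) / lam ^ k / lam = e k"
        unfolding e_def by (simp add: sum_divide_distrib)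
      finally show ?thesis .
    qed
    have "(\<lambda>k. g k n / lam ^ k) \<longlonglongrightarrow> 0"
      by (rule rec_conv[OF rec _ _ e0]) (use fact_lt_T[OF T step.hyps(2)] lam_pos in \<open>auto simp: lam_def\<close>)
    then show ?case using step.IH by (metis atLeastAtMost_iff le_antisym not_less_eq_eq)
  qed
  then show ?thesis using a by simp
qed

lemma v_conv: "a \<le> T \<Longrightarrow> (\<lambda>k. v k a / lam ^ k) \<longlonglongrightarrow> v 0 T * E T a"
proof -
  assume a: "a \<le> T"
  have "(\<lambda>k. g k a / lam ^ k + v 0 T * E T a) \<longlonglongrightarrow> 0 + v 0 T * E T a"
    by (intro tendsto_add g_conv[OF a] tendsto_const)
  moreover have "g k a / lam ^ k + v 0 T * E T a = v k a / lam ^ k" for k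
    unfolding g_def using lam_pos by (simp add: field_simps)
  ultimately show ?thesis by simp
qed

lemma alt_inv: "(\<Sum>a\<le>T. (-1)^a * v k a) = (\<Sum>a\<le>T. (-1)^a * v 0 a)"
proof (induction k)
  case 0 then show ?case by simp
next
  case (Suc k)
  have "(\<Sum>a\<le>T. (-1)^a * v (Suc k) a) = (\<Sum>b\<le>T. v k b * (\<Sum>a\<le>T. (-1)^a * real (W b a)))"
    unfolding vrec sum_distrib_left sum_distrib_right by (subst sum.swap) (simp add: algebra_simps)
  also have "\<dots> = (\<Sum>b\<le>T. v k b * (-1)^b)"
  proof (rule sum.cong[OF refl])
    fix b assume "b \<in> {..T}"
    then have "(\<Sum>a\<le>T. (-1)^a * real (W b a)) = (\<Sum>a\<le>b. (-1)^a * real (W b a))"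
      by (intro sum.mono_neutral_right) auto
    then show "v k b * (\<Sum>a\<le>T. (-1)^a * real (W b a)) = v k b * (-1)^b" by (simp add: W_alt)
  qed
  finally show ?case using Suc by (simp add: mult.commute)
qed

end

lemma root_bounds_k:
  fixes Qk :: "complex \<Rightarrow> complex" and qk :: "real \<Rightarrow> real" and A B M \<beta> \<epsilon> :: real
  assumes bp: "\<beta> > 0" and M: "M \<ge> 0" and ep: "0 < \<epsilon>" "\<epsilon> \<le> 1/2"
    and hB: "\<bar>B - \<beta>\<bar> \<le> \<epsilon> * \<beta> / 4" and hA: "\<bar>A\<bar> \<le> \<beta> / 2"
    and hMA: "M * \<bar>A\<bar> \<le> \<epsilon> * \<beta>^2 / 8" and Anz: "A \<noteq> 0"
    and R: "\<And>z. norm z \<le> 1 \<Longrightarrow> norm (Qk z - (of_real A + of_real B * z)) \<le> M * norm z ^ 2"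
    and qr: "\<And>t. Qk (of_real t) = of_real (qk t)" and qc: "continuous_on UNIV qk"
    and fin: "finite {z. Qk z = 0}"
  shows "(1 - \<epsilon>) * \<bar>A\<bar> / \<beta> < Min (norm ` {z. Qk z = 0}) \<and> Min (norm ` {z. Qk z = 0}) \<le> (1 + \<epsilon>) * \<bar>A\<bar> / \<beta>"
proof -
  define x where "x = \<bar>A\<bar>"
  have xp: "x > 0" using Anz unfolding x_def by simp
  have Bl: "B \<ge> \<beta> - \<epsilon> * \<beta> / 4" using hB unfolding abs_le_iff by linarith
  have Bu: "B \<le> \<beta> + \<epsilon> * \<beta> / 4" using hB unfolding abs_le_iff by linarith
  have ebp: "\<epsilon> * \<beta> > 0" using ep bp by simp
  have "\<epsilon> * \<beta> \<le> (1/2) * \<beta>" using ep bp by (intro mult_right_mono) auto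
  then have Bp: "B > 0" using Bl bp by linarith
  have MA: "M * x \<le> \<epsilon> * \<beta>^2 / 8" using hMA unfolding x_def .
  have xb: "x / \<beta> \<le> 1/2" using hA bp unfolding x_def by (simp add: divide_le_eq)
  have low: "norm z > (1 - \<epsilon>) * x / \<beta>" if Z: "Qk z = 0" for z
  proof (rule ccontr)
    assume "\<not> norm z > (1 - \<epsilon>) * x / \<beta>"
    then have nz: "norm z \<le> (1 - \<epsilon>) * x / \<beta>" by simp
    have "(1 - \<epsilon>) * x \<le> x" using ep xp by (simp add: algebra_simps)
    then have "(1 - \<epsilon>) * x / \<beta> \<le> x / \<beta>" using bp by (intro divide_right_mono) auto
    then have nz2: "norm z \<le> x / \<beta>" using nz by linarith
    have nz1: "norm z \<le> 1" using nz2 xb by linarith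
    have "norm (Qk z - (of_real A + of_real B * z)) = norm (of_real A + of_real B * z :: complex)"
      using Z by (metis diff_0 norm_minus_cancel)
    then have "norm (of_real A + of_real B * z) \<le> M * norm z ^ 2" using R[OF nz1] by simp
    moreover have "norm (of_real A + of_real B * z) \<ge> x - B * norm z"
    proof -
      have "norm (of_real A + of_real B * z) \<ge> norm (of_real A :: complex) - norm (of_real B * z)"
        by (rule norm_diff_ineq)
      then show ?thesis unfolding x_def using Bp by (simp add: norm_mult)
    qed
    ultimately have c1: "x - B * norm z \<le> M * norm z ^ 2" by simp
    have p1: "B * norm z \<le> (\<beta> + \<epsilon> * \<beta> / 4) * ((1 - \<epsilon>) * x / \<beta>)"
      by (rule mult_mono[OF Bu nz]) (use Bp Bu in auto)
    have p1': "(\<beta> + \<epsilon> * \<beta> / 4) * ((1 - \<epsilon>) * x / \<beta>) = (1 + \<epsilon>/4) * (1 - \<epsilon>) * x"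
      using bp by (simp add: field_simps)
    have p1'': "(1 + \<epsilon>/4) * (1 - \<epsilon>) * x \<le> (1 - 3 * \<epsilon> / 4) * x"
    proof (rule mult_right_mono)
      have "\<epsilon> * \<epsilon> \<ge> 0" by simp
      then show "(1 + \<epsilon>/4) * (1 - \<epsilon>) \<le> 1 - 3 * \<epsilon> / 4" by (simp add: algebra_simps)
    qed (use xp in simp)
    have p2: "norm z ^ 2 \<le> (x / \<beta>) ^ 2" by (rule power_mono[OF nz2]) simp
    have p3: "M * norm z ^ 2 \<le> M * (x / \<beta>) ^ 2" by (rule mult_left_mono[OF p2 M])
    have p4: "M * (x / \<beta>) ^ 2 = (M * x) * x / \<beta>^2" by (simp add: power2_eq_square)
    have "(M * x) * x \<le> (\<epsilon> * \<beta>^2 / 8) * x" by (rule mult_right_mono[OF MA]) (use xp in simp)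
    then have p5: "(M * x) * x / \<beta>^2 \<le> (\<epsilon> * \<beta>^2 / 8) * x / \<beta>^2"
      by (rule divide_right_mono) simp
    have p6: "(\<epsilon> * \<beta>^2 / 8) * x / \<beta>^2 = \<epsilon> * x / 8" using bp by (simp add: field_simps)
    have "x - (1 - 3 * \<epsilon> / 4) * x \<le> \<epsilon> * x / 8"
      using c1 p1 p1' p1'' p3 p4 p5 p6 by linarith
    then have "3 * (\<epsilon> * x) / 4 \<le> \<epsilon> * x / 8" by (simp add: algebra_simps)
    moreover have "\<epsilon> * x > 0" using ep xp by simp
    ultimately show False by simp
  qed
  have q0: "qk 0 = A"
  proof -
    have "norm (Qk 0 - of_real A) \<le> 0" using R[of 0] by simp
    then have "Qk 0 = of_real A" by simp
    then show ?thesis using qr[of 0] by simp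
  qed
  define t1 where "t1 = - ((1 + \<epsilon>) * A / \<beta>)"
  have at1: "\<bar>t1\<bar> = (1 + \<epsilon>) * x / \<beta>" unfolding t1_def x_def using ep bp by (simp add: abs_mult abs_divide)
  have t1le: "\<bar>t1\<bar> \<le> 1"
  proof -
    have "(1 + \<epsilon>) * (x / \<beta>) \<le> 2 * (1/2)" by (rule mult_mono) (use ep xb xp bp in auto)
    then show ?thesis unfolding at1 by simp
  qed
  have Rt: "\<bar>qk t1 - (A + B * t1)\<bar> \<le> M * t1 ^ 2"
  proof -
    have "norm (Qk (of_real t1) - (of_real A + of_real B * of_real t1)) \<le> M * norm (of_real t1 :: complex) ^ 2"
      by (rule R) (use t1le in simp)
    then show ?thesis unfolding qr by (simp flip: of_real_mult of_real_add of_real_diff)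
  qed
  define \<kappa> where "\<kappa> = B * (1 + \<epsilon>) / \<beta> - 1"
  have lin: "A + B * t1 = - A * \<kappa>" unfolding t1_def \<kappa>_def using bp by (simp add: field_simps)
  have kap: "\<kappa> \<ge> \<epsilon> / 2"
  proof -
    have "B * (1 + \<epsilon>) \<ge> (\<beta> - \<epsilon> * \<beta> / 4) * (1 + \<epsilon>)" by (rule mult_right_mono[OF Bl]) (use ep in simp)
    moreover have "(\<beta> - \<epsilon> * \<beta> / 4) * (1 + \<epsilon>) = \<beta> * ((1 - \<epsilon>/4) * (1 + \<epsilon>))" by (simp add: algebra_simps)
    moreover have "(1 - \<epsilon>/4) * (1 + \<epsilon>) \<ge> 1 + \<epsilon> / 2"
    proof -
      have "\<epsilon> * \<epsilon> \<le> \<epsilon> * 1" using ep by (intro mult_left_mono) auto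
      moreover have "(1 - \<epsilon>/4) * (1 + \<epsilon>) = 1 + 3 * \<epsilon> / 4 - \<epsilon> * \<epsilon> / 4" by (simp add: field_simps)
      ultimately show ?thesis by linarith
    qed
    moreover have "\<beta> * ((1 - \<epsilon>/4) * (1 + \<epsilon>)) \<ge> \<beta> * (1 + \<epsilon> / 2)"
      using calculation(3) bp by (intro mult_left_mono) auto
    ultimately have "B * (1 + \<epsilon>) \<ge> \<beta> * (1 + \<epsilon> / 2)" by linarith
    then have "B * (1 + \<epsilon>) / \<beta> \<ge> 1 + \<epsilon> / 2" using bp by (simp add: le_divide_eq mult.commute)
    then show ?thesis unfolding \<kappa>_def by linarith
  qed
  have Mt: "M * t1 ^ 2 \<le> 9 * (\<epsilon> * x) / 32"
  proof -
    have "t1 ^ 2 = \<bar>t1\<bar> ^ 2" by simp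
    also have "\<dots> \<le> (3/2 * (x / \<beta>)) ^ 2"
    proof (rule power_mono)
      have "(1 + \<epsilon>) * (x / \<beta>) \<le> 3/2 * (x / \<beta>)" by (rule mult_right_mono) (use ep xp bp in auto)
      then show "\<bar>t1\<bar> \<le> 3/2 * (x / \<beta>)" unfolding at1 by simp
    qed simp
    also have "\<dots> = 9/4 * (x * x / \<beta>^2)" by (simp add: power2_eq_square)
    finally have "M * t1 ^ 2 \<le> M * (9/4 * (x * x / \<beta>^2))" by (rule mult_left_mono[OF _ M])
    also have "\<dots> = 9/4 * ((M * x) * x / \<beta>^2)" by simp
    also have "\<dots> \<le> 9/4 * ((\<epsilon> * \<beta>^2 / 8) * x / \<beta>^2)"
      using MA xp bp by (intro mult_left_mono divide_right_mono mult_right_mono) auto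
    also have "\<dots> = 9 * (\<epsilon> * x) / 32" using bp by (simp add: field_simps)
    finally show ?thesis .
  qed
  have exz: "\<exists>t. qk t = 0 \<and> \<bar>t\<bar> \<le> \<bar>t1\<bar>"
  proof (cases "A > 0")
    case True
    have h1: "A * \<kappa> \<ge> A * (\<epsilon> / 2)" using kap True by (simp add: mult_left_mono)
    have h2: "qk t1 \<le> (A + B * t1) + M * t1^2" using Rt unfolding abs_le_iff by linarith
    have h3: "A * (\<epsilon> / 2) = (\<epsilon> * x) / 2" using True unfolding x_def by simp
    have h4: "A + B * t1 = - (A * \<kappa>)" using lin by simp
    have "qk t1 \<le> - (\<epsilon> * x) / 2 + 9 * (\<epsilon> * x) / 32"
      using h1 h2 h3 h4 Mt by linarith
    moreover have "\<epsilon> * x > 0" using ep xp by simp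
    ultimately have "qk t1 \<le> 0" by linarith
    moreover have "t1 \<le> 0"
    proof -
      have "0 \<le> (1 + \<epsilon>) * A / \<beta>" using True ep bp by simp
      moreover have "t1 = - ((1 + \<epsilon>) * A / \<beta>)" unfolding t1_def by (simp add: field_simps)
      ultimately show ?thesis by linarith
    qed
    ultimately obtain t where "t1 \<le> t" "t \<le> 0" "qk t = 0"
      using IVT'[of qk t1 0 0] q0 True qc continuous_on_subset by fastforce
    then show ?thesis by auto
  next
    case False
    then have An: "A < 0" using Anz by simp
    have h1: "(-A) * \<kappa> \<ge> (-A) * (\<epsilon> / 2)" using kap An by (intro mult_left_mono) auto
    have h2: "qk t1 \<ge> (A + B * t1) - M * t1^2" using Rt unfolding abs_le_iff by linarith
    have h3: "(-A) * (\<epsilon> / 2) = (\<epsilon> * x) / 2" using An unfolding x_def by simp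
    have h4: "A + B * t1 = (-A) * \<kappa>" using lin by simp
    have "qk t1 \<ge> (\<epsilon> * x) / 2 - 9 * (\<epsilon> * x) / 32"
      using h1 h2 h3 h4 Mt by linarith
    moreover have "\<epsilon> * x > 0" using ep xp by simp
    ultimately have "qk t1 \<ge> 0" by linarith
    moreover have "t1 \<ge> 0"
    proof -
      have "(1 + \<epsilon>) * A \<le> 0" using An ep by (simp add: mult_nonneg_nonpos)
      then have "(1 + \<epsilon>) * A / \<beta> \<le> 0" using bp by (simp add: divide_nonpos_pos)
      moreover have "t1 = - ((1 + \<epsilon>) * A / \<beta>)" unfolding t1_def by (simp add: field_simps)
      ultimately show ?thesis by linarith
    qed
    ultimately obtain t where "0 \<le> t" "t \<le> t1" "qk t = 0"
      using IVT'[of qk 0 0 t1] q0 An qc continuous_on_subset by fastforce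
    then show ?thesis by auto
  qed
  then obtain t where t: "qk t = 0" "\<bar>t\<bar> \<le> \<bar>t1\<bar>" by blast
  have zt: "of_real t \<in> {z. Qk z = 0}" using t qr by simp
  let ?S = "norm ` {z. Qk z = 0}"
  have fS: "finite ?S" using fin by simp
  have neS: "?S \<noteq> {}" using zt by blast
  have "norm (of_real t :: complex) \<in> ?S" using zt by (rule imageI)
  then have "Min ?S \<le> norm (of_real t :: complex)" by (rule Min_le[OF fS])
  then have up: "Min ?S \<le> (1 + \<epsilon>) * x / \<beta>" using t at1 by simp
  have "(1 - \<epsilon>) * x / \<beta> < Min ?S" using fS neS low by (subst Min_gr_iff) auto
  then show ?thesis using up unfolding x_def by simp
qed

lemma root_core:
  fixes Q :: "nat \<Rightarrow> complex \<Rightarrow> complex" and q :: "nat \<Rightarrow> real \<Rightarrow> real" and a b :: "nat \<Rightarrow> real"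
    and M \<beta> :: real
  assumes a0: "a \<longlonglongrightarrow> 0" and b\<beta>: "b \<longlonglongrightarrow> \<beta>" and bp: "\<beta> > 0" and M: "M \<ge> 0"
    and R: "\<And>k z. norm z \<le> 1 \<Longrightarrow> norm (Q k z - (of_real (a k) + of_real (b k) * z)) \<le> M * norm z ^ 2"
    and qr: "\<And>k t. Q k (of_real t) = of_real (q k t)" and qc: "\<And>k. continuous_on UNIV (q k)"
    and fin: "\<And>k. finite {z. Q k z = 0}" and anz: "\<And>k. a k \<noteq> 0"
  shows "(\<lambda>k. Min (norm ` {z. Q k z = 0}) / \<bar>a k\<bar>) \<longlonglongrightarrow> 1 / \<beta>"
proof (rule LIMSEQ_I)
  fix r :: real assume r: "r > 0"
  define \<epsilon> where "\<epsilon> = min (1/2) (r * \<beta> / 2)"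
  have ep: "0 < \<epsilon>" "\<epsilon> \<le> 1/2" using r bp unfolding \<epsilon>_def by auto
  have epr: "\<epsilon> / \<beta> < r"
  proof -
    have "\<epsilon> \<le> r * \<beta> / 2" unfolding \<epsilon>_def by simp
    then have "\<epsilon> / \<beta> \<le> (r * \<beta> / 2) / \<beta>" using bp by (intro divide_right_mono) auto
    also have "(r * \<beta> / 2) / \<beta> = r / 2" using bp by simp
    finally have "\<epsilon> / \<beta> \<le> r / 2" .
    then show ?thesis using r by linarith
  qed
  have "\<epsilon> * \<beta> / 4 > 0" using ep bp by simp
  then obtain N1 where N1: "\<And>k. k \<ge> N1 \<Longrightarrow> norm (b k - \<beta>) < \<epsilon> * \<beta> / 4"
    using LIMSEQ_D[OF b\<beta>] by fastforce
  define \<delta> where "\<delta> = min (\<beta> / 2) (\<epsilon> * \<beta>^2 / (8 * (M + 1)))"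
  have dp: "\<delta> > 0" unfolding \<delta>_def using bp ep M by simp
  obtain N2 where N2: "\<And>k. k \<ge> N2 \<Longrightarrow> norm (a k - 0) < \<delta>"
    using LIMSEQ_D[OF a0 dp] by fastforce
  show "\<exists>no. \<forall>n\<ge>no. norm (Min (norm ` {z. Q n z = 0}) / \<bar>a n\<bar> - 1 / \<beta>) < r"
  proof (intro exI allI impI)
    fix k assume k: "k \<ge> max N1 N2"
    have hB: "\<bar>b k - \<beta>\<bar> \<le> \<epsilon> * \<beta> / 4" using N1[of k] k by simp
    have ad: "\<bar>a k\<bar> < \<delta>" using N2[of k] k by simp
    have hA: "\<bar>a k\<bar> \<le> \<beta> / 2" using ad unfolding \<delta>_def by simp
    have hMA: "M * \<bar>a k\<bar> \<le> \<epsilon> * \<beta>^2 / 8"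
    proof -
      have "\<bar>a k\<bar> \<le> \<epsilon> * \<beta>^2 / (8 * (M + 1))" using ad unfolding \<delta>_def by simp
      then have "(M + 1) * \<bar>a k\<bar> \<le> \<epsilon> * \<beta>^2 / 8" using M by (simp add: le_divide_eq algebra_simps)
      moreover have "M * \<bar>a k\<bar> \<le> (M + 1) * \<bar>a k\<bar>" by (simp add: mult_right_mono)
      ultimately show ?thesis by linarith
    qed
    have bd: "(1 - \<epsilon>) * \<bar>a k\<bar> / \<beta> < Min (norm ` {z. Q k z = 0}) \<and> Min (norm ` {z. Q k z = 0}) \<le> (1 + \<epsilon>) * \<bar>a k\<bar> / \<beta>"
      by (rule root_bounds_k[OF bp M ep hB hA hMA anz R qr qc fin])
    define m where "m = Min (norm ` {z. Q k z = 0})"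
    have ak: "\<bar>a k\<bar> > 0" using anz by simp
    have lo: "(1 - \<epsilon>) / \<beta> < m / \<bar>a k\<bar>" using bd ak unfolding m_def by (simp add: field_simps)
    have hi: "m / \<bar>a k\<bar> \<le> (1 + \<epsilon>) / \<beta>" using bd ak unfolding m_def by (simp add: field_simps)
    have "\<bar>m / \<bar>a k\<bar> - 1 / \<beta>\<bar> \<le> \<epsilon> / \<beta>"
      using lo hi by (simp add: diff_divide_distrib add_divide_distrib abs_le_iff)
    then show "norm (Min (norm ` {z. Q k z = 0}) / \<bar>a k\<bar> - 1 / \<beta>) < r" using epr unfolding m_def by simp
  qed
qed

lemma prod_primes_pf:
  fixes P :: "nat set" assumes f: "finite P" and pr: "\<forall>p\<in>P. prime p"
  shows "prime_factors (\<Prod>P) = P"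
proof -
  have "0 \<notin> (\<lambda>x. x) ` P" using pr by auto
  then have "prime_factors (\<Prod>P) = \<Union>((prime_factors \<circ> (\<lambda>x. x)) ` P)"
    using prime_factors_prod[OF f, of "\<lambda>x. x"] by simp
  also have "\<dots> = P" using pr by (auto simp: prime_prime_factors)
  finally show ?thesis .
qed

lemma sqf_prod_pf:
  fixes k :: nat assumes k: "k \<noteq> 0" and sq: "squarefree k"
  shows "\<Prod>(prime_factors k) = k"
proof -
  have "(\<Prod>p\<in>prime_factors k. p ^ multiplicity p k) = k"
    using prod_prime_factors[OF k] by simp
  moreover have "(\<Prod>p\<in>prime_factors k. p ^ multiplicity p k) = (\<Prod>p\<in>prime_factors k. p)"
    using sq k by (intro prod.cong refl) (simp add: squarefree_factorial_semiring')
  ultimately show ?thesis by simp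
qed

lemma Delta_eq: "Delta n = (\<lambda>k. Prim ` prime_factors k) ` {k. 1 \<le> k \<and> k \<le> n \<and> squarefree k}"
  unfolding Delta_def by blast

lemma Delta_sc: assumes n: "n \<ge> 1" shows "sc (Delta n)"
proof -
  have "finite (Delta n)" unfolding Delta_eq by simp
  moreover have "Delta n \<noteq> {}" unfolding Delta_eq using n by auto
  moreover have "\<forall>\<sigma>\<in>Delta n. finite \<sigma>" unfolding Delta_eq by auto
  moreover have "\<forall>\<sigma>\<in>Delta n. \<forall>\<tau>. \<tau> \<subseteq> \<sigma> \<longrightarrow> \<tau> \<in> Delta n"
  proof (intro ballI allI impI)
    fix \<sigma> \<tau> assume s: "\<sigma> \<in> Delta n" and t: "\<tau> \<subseteq> \<sigma>"
    then obtain k where k: "1 \<le> k" "k \<le> n" "squarefree k" and sk: "\<sigma> = Prim ` prime_factors k"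
      unfolding Delta_eq by blast
    define P where "P = {p \<in> prime_factors k. Prim p \<in> \<tau>}"
    have tP: "\<tau> = Prim ` P" using t sk unfolding P_def by blast
    have fP: "finite P" unfolding P_def by simp
    have prP: "\<forall>p\<in>P. prime p" unfolding P_def by auto
    have sub: "P \<subseteq> prime_factors k" unfolding P_def by blast
    have "\<Prod>P dvd \<Prod>(prime_factors k)" by (rule prod_dvd_prod_subset[OF _ sub]) simp
    then have dv: "\<Prod>P dvd k" using sqf_prod_pf[of k] k by simp
    have k0: "k \<noteq> 0" using k by simp
    have "\<Prod>P \<noteq> 0" using dv k0 by auto
    moreover have "\<Prod>P \<le> k" using dv k0 by (simp add: dvd_imp_le)
    moreover have "squarefree (\<Prod>P)" using squarefree_mono[OF dv k(3)] .
    moreover have "prime_factors (\<Prod>P) = P" using prod_primes_pf[OF fP prP] .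
    ultimately show "\<tau> \<in> Delta n" unfolding Delta_eq tP using k
      by (intro image_eqI[of _ _ "\<Prod>P"]) auto
  qed
  ultimately show ?thesis unfolding sc_def by blast
qed

lemma Delta_Tm: assumes n: "n \<ge> 6" shows "Tm (Delta n) \<ge> 2"
proof -
  have p2: "prime (2::nat)" by simp
  have "{2..<(3::nat)} = {2}" by auto
  then have p3: "prime (3::nat)" by (simp add: prime_nat_iff')
  have "coprime (2::nat) 3" using primes_coprime[OF p2 p3] by simp
  then have sq: "squarefree (6::nat)"
    using squarefree_mult_coprime[of "2::nat" 3] squarefree_prime[OF p2] squarefree_prime[OF p3] by simp
  have "prime_factors (6::nat) = prime_factors (2 * 3 :: nat)" by simp
  also have "\<dots> = {2, 3}" using prime_factors_product[of "2::nat" 3] prime_prime_factors[OF p2] prime_prime_factors[OF p3]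
    by (simp add: insert_commute)
  finally have pf: "prime_factors (6::nat) = {2, 3}" .
  have mem: "{Prim 2, Prim 3} \<in> Delta n" unfolding Delta_eq using n sq
    by (intro image_eqI[of _ _ 6]) (auto simp: pf)
  have "card {Prim 2, Prim 3} = 2" by simp
  then show ?thesis using Tm_ge[OF Delta_sc mem] n by simp
qed

lemma cdim_Tm: "cdim D = int (Tm D) - 1" by (simp add: cdim_def Tm_def)

lemma fvec_fc: "fvec D (int a - 1) = fc D a" unfolding fvec_def fc_def by simp

lemma int_reindex: "(\<Sum>i\<in>{-1..int T - 1}. f i) = (\<Sum>a\<le>T. f (int a - 1))"
  by (rule sum.reindex_bij_witness[of _ "\<lambda>a. int a - 1" "\<lambda>i. nat (i+1)"]) auto

lemma hpoly_eval: "poly (hpoly D) z = (\<Sum>a\<le>Tm D. of_nat (fc D a) * (z - 1) ^ (Tm D - a))"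
proof -
  have "poly (hpoly D) z = (\<Sum>i\<in>{-1..cdim D}. of_nat (fvec D i) * (z - 1) ^ nat (cdim D - i))"
    unfolding hpoly_def poly_pcompose poly_sum poly_monom by simp
  also have "\<dots> = (\<Sum>a\<le>Tm D. of_nat (fc D a) * (z - 1) ^ (Tm D - a))"
    unfolding cdim_Tm int_reindex fvec_fc by (intro sum.cong refl) (simp add: nat_diff_distrib)
  finally show ?thesis .
qed

lemma red_euler_fc: assumes "sc D" shows "red_euler D = - (\<Sum>a\<le>Tm D. (-1)^a * real (fc D a))"
proof -
  have "red_euler D = (\<Sum>a\<le>Tm D. real (fc D a) * ((-1::real) powi (int a - 1)))"
    unfolding red_euler_def
    using sum_by_card[OF assms, of "Tm D" "\<lambda>a. (-1::real) powi (int a - 1)"] Tm_ge[OF assms] by simp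
  also have "\<dots> = (\<Sum>a\<le>Tm D. - ((-1)^a * real (fc D a)))"
  proof (intro sum.cong refl)
    fix a
    have "(-1::real) powi (int a - 1) = (-1) powi (int a) / (-1) powi 1" by (rule power_int_diff) simp
    then have "(-1::real) powi (int a - 1) = - ((-1)^a)" by simp
    then show "real (fc D a) * ((-1::real) powi (int a - 1)) = - ((-1)^a * real (fc D a))" by simp
  qed
  finally show ?thesis by (simp add: sum_negf)
qed

lemma pcompose_monom_lin: "pcompose (monom c m) [:-1, 1:] = smult c ([:-1, 1:] ^ m :: real poly)"
  by (subst poly_eq_poly_eq_iff[symmetric]) (simp add: fun_eq_iff poly_pcompose poly_monom)

lemma Hcoef_E: assumes T: "T \<ge> 2" shows "Hcoef 1 (int T - 1) = E T 1"
proof -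
  have H: "Hpoly (int T - 1) = (\<Sum>a\<le>T. smult (E T a) ([:-1, 1:] ^ (T - a)))"
    unfolding Hpoly_def Fpoly_def pcompose_sum pcompose_monom_lin int_reindex E_def
    by (intro sum.cong refl) (simp add: nat_diff_distrib)
  have "Hcoef 1 (int T - 1) = coeff (Hpoly (int T - 1)) (T - 1)"
    unfolding Hcoef_def using T by (simp add: nat_diff_distrib)
  also have "\<dots> = (\<Sum>a\<le>T. E T a * coeff ([:-1, 1:] ^ (T - a)) (T - 1))"
    unfolding H coeff_sum by simp
  also have "\<dots> = E T 1 * coeff ([:-1, 1:] ^ (T - 1)) (T - 1) + (\<Sum>a\<in>{..T} - {1}. E T a * coeff ([:-1, 1:] ^ (T - a)) (T - 1))"
    using T by (subst sum.remove[of _ 1]) auto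
  also have "(\<Sum>a\<in>{..T} - {1}. E T a * coeff ([:-1, 1:] ^ (T - a)) (T - 1)) = 0"
  proof (intro sum.neutral ballI)
    fix a assume a: "a \<in> {..T} - {1}"
    show "E T a * coeff ([:-1, 1:] ^ (T - a)) (T - 1) = 0"
    proof (cases "a = 0")
      case True then show ?thesis using E_zero[OF T] by simp
    next
      case False
      then have "T - a < T - 1" using a by auto
      then have "degree ([:-1, 1:] ^ (T - a) :: real poly) < T - 1" by (simp add: degree_linear_power)
      then show ?thesis by (simp add: coeff_eq_0)
    qed
  qed
  finally show ?thesis by (simp add: coeff_linear_power)
qed

lemma expand_bound:
  fixes z :: complex
  assumes z: "norm z \<le> 1"
  shows "norm ((z - 1) ^ m - (-1) ^ m - of_nat m * (-1) ^ (m - 1) * z) \<le> 2 ^ m * norm z ^ 2"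
proof (cases m)
  case 0 then show ?thesis by simp
next
  case (Suc m')
  show ?thesis
  proof (cases m')
    case 0 then show ?thesis using Suc by simp
  next
    case (Suc n)
    have m: "m = Suc (Suc n)" using Suc \<open>m = Suc m'\<close> by simp
    define f where "f l = of_nat (m choose l) * z ^ l * (-1) ^ (m - l)" for l
    have bin: "(z - 1) ^ m = (\<Sum>l\<le>m. f l)"
      unfolding f_def using binomial_ring[of z "-1" m] by simp
    have shift: "(\<Sum>l\<le>m. g l) = g 0 + g 1 + (\<Sum>l\<le>n. g (Suc (Suc l)))" for g :: "nat \<Rightarrow> 'b::comm_monoid_add"
      unfolding m by (simp only: sum.atMost_Suc_shift add.assoc One_nat_def)
    have "f 0 = (-1) ^ m" unfolding f_def by simp
    moreover have "f 1 = of_nat m * (-1) ^ (m - 1) * z" unfolding f_def by simp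
    ultimately have eq: "(z - 1) ^ m - (-1) ^ m - of_nat m * (-1) ^ (m - 1) * z = (\<Sum>l\<le>n. f (Suc (Suc l)))"
      unfolding bin shift[of f] by simp
    have "norm (\<Sum>l\<le>n. f (Suc (Suc l))) \<le> (\<Sum>l\<le>n. norm (f (Suc (Suc l))))" by (rule norm_sum)
    also have "\<dots> \<le> (\<Sum>l\<le>n. real (m choose (Suc (Suc l))) * norm z ^ 2)"
    proof (rule sum_mono)
      fix l assume "l \<in> {..n}"
      have "norm (f (Suc (Suc l))) = real (m choose (Suc (Suc l))) * norm z ^ (Suc (Suc l))"
        unfolding f_def by (simp add: norm_mult norm_power)
      also have "norm z ^ (Suc (Suc l)) \<le> norm z ^ 2"
        using z by (intro power_decreasing) auto
      then have "real (m choose (Suc (Suc l))) * norm z ^ (Suc (Suc l)) \<le> real (m choose (Suc (Suc l))) * norm z ^ 2"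
        by (intro mult_left_mono) auto
      finally show "norm (f (Suc (Suc l))) \<le> real (m choose (Suc (Suc l))) * norm z ^ 2" .
    qed
    also have "\<dots> = real (\<Sum>l\<le>n. m choose (Suc (Suc l))) * norm z ^ 2"
      by (simp add: sum_distrib_right)
    also have "\<dots> \<le> 2 ^ m * norm z ^ 2"
    proof (rule mult_right_mono)
      have "(\<Sum>l\<le>n. m choose (Suc (Suc l))) \<le> (\<Sum>l\<le>m. m choose l)"
        unfolding shift[of "\<lambda>l. m choose l"] by simp
      then have "real (\<Sum>l\<le>n. m choose (Suc (Suc l))) \<le> real (2 ^ m)" by (simp only: choose_row_sum of_nat_le_iff)
      then show "real (\<Sum>l\<le>n. m choose (Suc (Suc l))) \<le> 2 ^ m" by simp
    qed simp
    finally show ?thesis unfolding eq .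
  qed
qed

lemma neg1_pow_diff: assumes "a \<le> T" shows "(-1::real)^(T-a) = (-1)^T * (-1)^a"
proof -
  obtain m where m: "T = a + m" using assms le_Suc_ex by blast
  have "(-1::real)^a * (-1)^a = 1" by (simp add: power_add[symmetric])
  then have "(-1::real)^T * (-1)^a = (-1)^m * ((-1)^a * (-1)^a)" unfolding m by (simp add: power_add algebra_simps)
  also have "\<dots> = (-1)^m" using \<open>(-1::real)^a * (-1)^a = 1\<close> by simp
  finally show ?thesis using m by simp
qed

lemma R_generic:
  fixes w :: "nat \<Rightarrow> real" and L :: real and z :: complex
  assumes w: "\<And>a. w a \<ge> 0" and L: "L > 0" and z: "norm z \<le> 1"
  shows "norm ((\<Sum>a\<le>T. of_real (w a) * (z - 1) ^ (T - a)) / of_real L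
           - (of_real ((\<Sum>a\<le>T. w a * (-1) ^ (T - a)) / L)
              + of_real ((\<Sum>a\<le>T. w a * real (T - a) * (-1) ^ (T - a - 1)) / L) * z))
         \<le> ((\<Sum>a\<le>T. w a * 2 ^ (T - a)) / L) * norm z ^ 2"
proof -
  define e where "e a = (z - 1) ^ (T - a) - (-1) ^ (T - a) - of_nat (T - a) * (-1) ^ (T - a - 1) * z" for a
  have c0: "of_real (\<Sum>a\<le>T. w a * (-1) ^ (T - a)) = (\<Sum>a\<le>T. of_real (w a) * (-1) ^ (T - a) :: complex)"
    by simp
  have c1: "of_real (\<Sum>a\<le>T. w a * real (T - a) * (-1) ^ (T - a - 1)) = (\<Sum>a\<le>T. of_real (w a) * of_nat (T - a) * (-1) ^ (T - a - 1) :: complex)"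
    by simp
  have eq: "(\<Sum>a\<le>T. of_real (w a) * (z - 1) ^ (T - a)) / of_real L
           - (of_real ((\<Sum>a\<le>T. w a * (-1) ^ (T - a)) / L)
              + of_real ((\<Sum>a\<le>T. w a * real (T - a) * (-1) ^ (T - a - 1)) / L) * z)
         = (\<Sum>a\<le>T. of_real (w a) * e a) / of_real L"
  proof -
    have "(\<Sum>a\<le>T. of_real (w a) * e a) = (\<Sum>a\<le>T. of_real (w a) * (z - 1) ^ (T - a))
           - (\<Sum>a\<le>T. of_real (w a) * (-1) ^ (T - a)) - (\<Sum>a\<le>T. of_real (w a) * of_nat (T - a) * (-1) ^ (T - a - 1)) * z"
    proof -
      define P where "P a = of_real (w a) * (z - 1) ^ (T - a)" for a
      define C :: "nat \<Rightarrow> complex" where "C a = of_real (w a) * (-1) ^ (T - a)" for a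
      define D :: "nat \<Rightarrow> complex" where "D a = of_real (w a) * of_nat (T - a) * (-1) ^ (T - a - 1)" for a
      have "(\<Sum>a\<le>T. of_real (w a) * e a) = (\<Sum>a\<le>T. P a - C a - D a * z)"
        by (rule sum.cong) (simp_all add: e_def P_def C_def D_def algebra_simps)
      also have "\<dots> = sum P {..T} - sum C {..T} - sum D {..T} * z"
        by (simp only: sum_subtractf sum_distrib_right)
      finally show ?thesis unfolding P_def C_def D_def .
    qed
    then show ?thesis unfolding of_real_divide c0 c1 using L by (simp add: field_simps)
  qed
  have "norm (\<Sum>a\<le>T. of_real (w a) * e a) \<le> (\<Sum>a\<le>T. norm (of_real (w a) * e a))" by (rule norm_sum)
  also have "\<dots> \<le> (\<Sum>a\<le>T. w a * 2 ^ (T - a) * norm z ^ 2)"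
  proof (rule sum_mono)
    fix a
    have "norm (e a) \<le> 2 ^ (T - a) * norm z ^ 2" unfolding e_def by (rule expand_bound[OF z])
    then have "w a * norm (e a) \<le> w a * (2 ^ (T - a) * norm z ^ 2)" using w by (intro mult_left_mono) auto
    then show "norm (of_real (w a) * e a) \<le> w a * 2 ^ (T - a) * norm z ^ 2"
      using w[of a] by (simp add: norm_mult mult.assoc)
  qed
  also have "\<dots> = (\<Sum>a\<le>T. w a * 2 ^ (T - a)) * norm z ^ 2" by (simp add: sum_distrib_right)
  finally have "norm (\<Sum>a\<le>T. of_real (w a) * e a) / L \<le> (\<Sum>a\<le>T. w a * 2 ^ (T - a)) * norm z ^ 2 / L"
    using L by (intro divide_right_mono) auto
  then show ?thesis unfolding eq using L by (simp add: norm_divide)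
qed

lemma sum_sign: "(\<Sum>a\<le>T. w a * (-1::real) ^ (T - a)) = (-1)^T * (\<Sum>a\<le>T. (-1)^a * w a)"
proof -
  have "(\<Sum>a\<le>T. w a * (-1::real) ^ (T - a)) = (\<Sum>a\<le>T. (-1)^T * ((-1)^a * w a))"
    by (rule sum.cong[OF refl]) (simp add: neg1_pow_diff)
  then show ?thesis by (simp add: sum_distrib_left)
qed

theorem corollary3p1:
  fixes n :: nat
  assumes "n \<ge> 6"
  shows "(\<lambda>k::nat. \<bar>red_euler (Delta n)\<bar>) \<sim>[sequentially]
         (\<lambda>k. Hcoef 1 (cdim (Delta n)) * real (fvec (Delta n) (cdim (Delta n)))
               * min_zero_modulus (hpoly ((bsd ^^ k) (Delta n)))
               * fact (nat (cdim (Delta n) + 1)) ^ k)"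
proof -
  define D where "D = Delta n"
  have scD: "sc D" unfolding D_def using Delta_sc assms by simp
  define T where "T = Tm D"
  have T2: "T \<ge> 2" unfolding T_def D_def using Delta_Tm[OF assms] .
  define Dk where "Dk k = (bsd ^^ k) D" for k
  have scDk: "sc (Dk k)" for k unfolding Dk_def using iter_props[OF scD] by blast
  have TDk: "Tm (Dk k) = T" for k unfolding Dk_def T_def using iter_props[OF scD] by blast
  define v where "v k a = real (fc (Dk k) a)" for k a
  have vrec: "v (Suc k) a = (\<Sum>b\<le>T. real (W b a) * v k b)" for k a
  proof -
    have "Dk (Suc k) = bsd (Dk k)" unfolding Dk_def by simp
    then show ?thesis unfolding v_def
      using fc_bsd_sum[OF scDk[of k], of T a] Tm_ge[OF scDk[of k]] TDk[of k] by auto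
  qed
  interpret F: fseq v T by unfold_locales (use T2 vrec in auto)
  have v_nonneg: "v k a \<ge> 0" for k a unfolding v_def by simp
  have lam: "F.lam = fact T" unfolding F.lam_def ..
  have lam1: "F.lam > 1" using fact_lt_T[OF T2, of 1] T2 unfolding lam by simp
  have vT0: "v 0 T > 0"
  proof -
    have "fc D T > 0" using fc_pos_iff[OF scD] Tm_ex[OF scD] unfolding T_def by blast
    then show ?thesis unfolding v_def Dk_def by simp
  qed
  define \<beta> where "\<beta> = v 0 T * E T 1"
  have bp: "\<beta> > 0" unfolding \<beta>_def using vT0 E_one_pos[OF T2] by simp
  have cd: "cdim D = int T - 1" unfolding T_def by (rule cdim_Tm)
  have H1: "Hcoef 1 (cdim D) = E T 1" unfolding cd by (rule Hcoef_E[OF T2])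
  have fv: "real (fvec D (cdim D)) = v 0 T" unfolding cd fvec_fc v_def Dk_def by simp
  have ft: "fact (nat (cdim D + 1)) = (fact T :: real)" unfolding cd by simp
  define \<rho> where "\<rho> k = min_zero_modulus (hpoly (Dk k))" for k
  have RHS: "Hcoef 1 (cdim D) * real (fvec D (cdim D)) * min_zero_modulus (hpoly ((bsd ^^ k) D)) * fact (nat (cdim D + 1)) ^ k
      = \<beta> * \<rho> k * F.lam ^ k" for k
    unfolding H1 fv ft \<rho>_def Dk_def \<beta>_def lam by simp
  have peval: "poly (hpoly (Dk k)) z = (\<Sum>a\<le>T. of_real (v k a) * (z - 1) ^ (T - a))" for k z
    unfolding hpoly_eval TDk v_def by simp
  have hp_ne: "hpoly (Dk k) \<noteq> 0" for k
  proof
    assume h0: "hpoly (Dk k) = 0"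
    have "poly (hpoly (Dk k)) 1 = (\<Sum>a\<le>T. of_real (v k a) * (1 - 1) ^ (T - a) :: complex)" by (rule peval)
    also have "\<dots> = of_real (v k T)"
    proof -
      have "(\<Sum>a\<le>T. of_real (v k a) * (0::complex) ^ (T - a)) = (\<Sum>a<T. of_real (v k a) * (0::complex) ^ (T - a)) + of_real (v k T)"
        by (simp add: lessThan_Suc_atMost[symmetric])
      also have "(\<Sum>a<T. of_real (v k a) * (0::complex) ^ (T - a)) = 0" by (intro sum.neutral) auto
      finally show ?thesis by simp
    qed
    finally have "v k T = 0" using h0 by simp
    moreover have "v k T > 0" using F.vT[of k] vT0 lam1 by simp
    ultimately show False by simp
  qed
  have fin: "finite {z. poly (hpoly (Dk k)) z = 0}" for k using poly_roots_finite[OF hp_ne] .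
  define c0 where "c0 = (\<Sum>a\<le>T. v 0 a * (-1) ^ (T - a))"
  have c0k: "(\<Sum>a\<le>T. v k a * (-1) ^ (T - a)) = c0" for k
  proof -
    have "(\<Sum>a\<le>T. v k a * (-1) ^ (T - a)) = (-1)^T * (\<Sum>a\<le>T. (-1)^a * v k a)"
      by (rule sum_sign)
    also have "\<dots> = (-1)^T * (\<Sum>a\<le>T. (-1)^a * v 0 a)" using F.alt_inv by simp
    also have "\<dots> = c0" unfolding c0_def by (rule sum_sign[symmetric])
    finally show ?thesis .
  qed
  have chi: "\<bar>red_euler D\<bar> = \<bar>c0\<bar>"
  proof -
    have "red_euler D = - (\<Sum>a\<le>T. (-1)^a * v 0 a)"
      using red_euler_fc[OF scD] unfolding T_def v_def Dk_def by simp
    moreover have "c0 = (-1)^T * (\<Sum>a\<le>T. (-1)^a * v 0 a)"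
      unfolding c0_def by (rule sum_sign)
    ultimately show ?thesis by (simp add: abs_mult)
  qed
  have p0: "poly (hpoly (Dk k)) 0 = of_real c0" for k
  proof -
    have "(of_real c0 :: complex) = of_real (\<Sum>a\<le>T. v k a * (-1) ^ (T - a))" using c0k[of k] by simp
    also have "\<dots> = (\<Sum>a\<le>T. of_real (v k a) * (-1) ^ (T - a))" by (simp add: of_real_sum)
    finally show ?thesis unfolding peval by simp
  qed
  show ?thesis
  proof (cases "c0 = 0")
    case True
    have "\<rho> k = 0" for k
    proof -
      have "(0::complex) \<in> {z. poly (hpoly (Dk k)) z = 0}" using p0[of k] True by simp
      then have "(0::real) \<in> norm ` {z. poly (hpoly (Dk k)) z = 0}" by force
      then have "Min (norm ` {z. poly (hpoly (Dk k)) z = 0}) \<le> 0" using fin[of k] by (intro Min_le) auto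
      moreover have "Min (norm ` {z. poly (hpoly (Dk k)) z = 0}) \<ge> 0"
        using fin[of k] \<open>(0::real) \<in> _\<close> by (subst Min_ge_iff) auto
      ultimately show ?thesis unfolding \<rho>_def min_zero_modulus_def by simp
    qed
    then have "(\<lambda>k. Hcoef 1 (cdim D) * real (fvec D (cdim D)) * min_zero_modulus (hpoly ((bsd ^^ k) D)) * fact (nat (cdim D + 1)) ^ k)
             = (\<lambda>k. \<bar>red_euler D\<bar>)"
      unfolding RHS chi True by simp
    then show ?thesis unfolding D_def[symmetric] by (simp add: asymp_equiv_refl)
  next
    case False
    define Q where "Q k z = poly (hpoly (Dk k)) z / of_real (F.lam ^ k)" for k z
    define q where "q k t = (\<Sum>a\<le>T. v k a * (t - 1) ^ (T - a)) / F.lam ^ k" for k t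
    define aa where "aa k = c0 / F.lam ^ k" for k
    define c1 where "c1 k = (\<Sum>a\<le>T. v k a * real (T - a) * (-1) ^ (T - a - 1))" for k
    define bb where "bb k = c1 k / F.lam ^ k" for k
    define s where "s k = (\<Sum>a\<le>T. v k a * 2 ^ (T - a)) / F.lam ^ k" for k
    have lamk: "F.lam ^ k > 0" for k using lam1 by simp
    have aa0: "aa \<longlonglongrightarrow> 0"
    proof -
      have "(\<lambda>k. c0 * (1 / F.lam) ^ k) \<longlonglongrightarrow> c0 * 0"
        by (intro tendsto_mult tendsto_const LIMSEQ_power_zero) (use lam1 in auto)
      then show ?thesis unfolding aa_def by (simp add: power_one_over divide_inverse power_inverse)
    qed
    have bb_lim: "bb \<longlonglongrightarrow> \<beta>"
    proof -
      have L1: "(\<lambda>k. \<Sum>a\<le>T. (v k a / F.lam ^ k) * real (T - a) * (-1) ^ (T - a - 1))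
            \<longlonglongrightarrow> (\<Sum>a\<le>T. (v 0 T * E T a) * real (T - a) * (-1) ^ (T - a - 1))"
        by (intro tendsto_sum tendsto_mult tendsto_const F.v_conv) auto
      have L2: "(\<Sum>a\<le>T. (v 0 T * E T a) * real (T - a) * (-1) ^ (T - a - 1)) = \<beta>"
      proof -
        have "(\<Sum>a\<le>T. (v 0 T * E T a) * real (T - a) * (-1) ^ (T - a - 1))
            = v 0 T * (\<Sum>a\<le>T. E T a * real (T - a) * (-1) ^ (T - a - 1))"
          by (simp only: sum_distrib_left mult.assoc)
        then show ?thesis unfolding \<beta>_def E_lin[OF T2] .
      qed
      have L3: "bb = (\<lambda>k. \<Sum>a\<le>T. (v k a / F.lam ^ k) * real (T - a) * (-1) ^ (T - a - 1))"
        unfolding bb_def c1_def by (rule ext) (simp add: sum_divide_distrib)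
      show ?thesis unfolding L3 using L1 unfolding L2 .
    qed
    have s_conv: "convergent s"
    proof -
      have "(\<lambda>k. \<Sum>a\<le>T. (v k a / F.lam ^ k) * 2 ^ (T - a)) \<longlonglongrightarrow> (\<Sum>a\<le>T. (v 0 T * E T a) * 2 ^ (T - a))"
        by (intro tendsto_sum tendsto_mult tendsto_const F.v_conv) auto
      moreover have "s = (\<lambda>k. \<Sum>a\<le>T. (v k a / F.lam ^ k) * 2 ^ (T - a))"
        unfolding s_def by (rule ext) (simp add: sum_divide_distrib)
      ultimately show ?thesis unfolding convergent_def by auto
    qed
    obtain K where K: "K > 0" "\<And>k. norm (s k) \<le> K"
      using convergent_imp_Bseq[OF s_conv] by (auto simp: Bseq_def)
    have R: "norm (Q k z - (of_real (aa k) + of_real (bb k) * z)) \<le> K * norm z ^ 2" if z: "norm z \<le> 1" for k z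
    proof -
      have "norm (Q k z - (of_real (aa k) + of_real (bb k) * z)) \<le> s k * norm z ^ 2"
        using R_generic[of "v k" "F.lam ^ k" z T, OF v_nonneg lamk z]
        unfolding Q_def peval aa_def bb_def c1_def s_def c0k .
      also have "\<dots> \<le> K * norm z ^ 2" using K(2)[of k] by (intro mult_right_mono) auto
      finally show ?thesis .
    qed
    have qr: "Q k (of_real t) = of_real (q k t)" for k t
      unfolding Q_def q_def peval by simp
    have qc: "continuous_on UNIV (q k)" for k
      unfolding q_def using lam1 by (intro continuous_intros) auto
    have finQ: "finite {z. Q k z = 0}" for k
    proof -
      have "{z. Q k z = 0} = {z. poly (hpoly (Dk k)) z = 0}" unfolding Q_def using lamk[of k] lam1 by auto
      then show ?thesis using fin by simp
    qed
    have anz: "aa k \<noteq> 0" for k unfolding aa_def using False lamk[of k] lam1 by auto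
    have lim: "(\<lambda>k. Min (norm ` {z. Q k z = 0}) / \<bar>aa k\<bar>) \<longlonglongrightarrow> 1 / \<beta>"
      by (rule root_core[OF aa0 bb_lim bp _ R qr qc finQ anz]) (use K in auto)
    have zs: "{z. Q k z = 0} = {z. poly (hpoly (Dk k)) z = 0}" for k unfolding Q_def using lamk[of k] lam1 by auto
    have "(\<lambda>k. \<beta> * \<bar>c0\<bar> * (Min (norm ` {z. Q k z = 0}) / \<bar>aa k\<bar>)) \<longlonglongrightarrow> \<beta> * \<bar>c0\<bar> * (1 / \<beta>)"
      by (intro tendsto_mult tendsto_const lim)
    moreover have "\<beta> * \<bar>c0\<bar> * (Min (norm ` {z. Q k z = 0}) / \<bar>aa k\<bar>) = \<beta> * \<rho> k * F.lam ^ k" for k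
      unfolding zs \<rho>_def min_zero_modulus_def aa_def using False lamk[of k]
      by (simp add: abs_divide field_simps)
    ultimately have g: "(\<lambda>k. \<beta> * \<rho> k * F.lam ^ k) \<longlonglongrightarrow> \<bar>c0\<bar>" using bp by simp
    have "(\<lambda>k. \<bar>c0\<bar> / (\<beta> * \<rho> k * F.lam ^ k)) \<longlonglongrightarrow> \<bar>c0\<bar> / \<bar>c0\<bar>"
      by (intro tendsto_divide tendsto_const g) (use False in simp)
    then have "(\<lambda>k. \<bar>red_euler D\<bar>) \<sim>[sequentially] (\<lambda>k. \<beta> * \<rho> k * F.lam ^ k)"
      unfolding chi using False by (intro asymp_equivI') simp
    then show ?thesis unfolding RHS D_def[symmetric] .
  qed
qed

end
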